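(* Let $C$ be a coalgebra and $H$ a bialgebra over $\mathbb{K}$. Let $P$ be an algebra which is an $(H,C)$-bicomodule and whose left $H$-coaction ${}^H\rho$ is an algebra map. Suppose $P^C(B)$ is a $C$-coalgebra Galois extension with $B\subseteq {}^{\mathrm{co}H}P$ (so that ${}^H\rho$ is a $(B,B)$-bimodule map, where $B$ acts on $H\otimes P$ via the second factor). Then for every $c\in C$, in $H\otimes P\otimes_B P$, $$c^{[1]}{}_{(-1)}c^{[2]}{}_{(-1)}\otimes c^{[1]}{}_{(0)}\otimes_B c^{[2]}{}_{(0)}=1_H\otimes c^{[1]}\otimes_B c^{[2]}.$$ If, in addition, $H$ is a Hopf algebra with antipode $S$, then for every $c\in C$, $$c^{[1]}{}_{(-1)}\otimes c^{[1]}{}_{(0)}\otimes_B c^{[2]}=S(c^{[2]}{}_{(-1)})\otimes c^{[1]}\otimes_B c^{[2]}{}_{(0)}.$$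
   Context: Sweedler notation: left $H$-coaction ${}^H\rho(p)=p_{(-1)}\otimes p_{(0)}$, right $C$-coaction $\rho^C(p)=p_{(0)}\otimes p_{(1)}$. An $(H,C)$-bicomodule is a left $H$-comodule and right $C$-comodule whose coactions commute. ${}^{\mathrm{co}H}P=\{p\in P:{}^H\rho(p)=1_H\otimes p\}$. For $P$ an algebra and right $C$-comodule, $P^{\mathrm{co}C}=\{b\in P:\rho^C(bp)=b\rho^C(p)\ \forall p\}$; with $B=P^{\mathrm{co}C}$ the canonical map is $\mathrm{can}:P\otimes_BP\to P\otimes C$, $p\otimes_Bp'\mapsto pp'_{(0)}\otimes p'_{(1)}$, and $P^C(B)$ is a $C$-coalgebra Galois extension if $\mathrm{can}$ is bijective. The translation map is $\tau(c)=\mathrm{can}^{-1}(1_P\otimes c)=:c^{[1]}\otimes_B c^{[2]}$ (summation implicit). *)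

theory Defs
  imports Main "HOL.Vector_Spaces"
begin

text \<open>An element of a tensor product V1 (x) ... (x) Vn (possibly balanced over a
subalgebra B) is represented by a finitely supported formal linear combination
of tuples, i.e. a function from tuples to the field K.  Two representatives
denote the same tensor iff their difference lies in the K-span of the
defining relations (multilinearity, and B-balancedness where relevant).\<close>

definition supp :: "('x \<Rightarrow> 'k::zero) \<Rightarrow> 'x set" where
  "supp f = {x. f x \<noteq> 0}"

definition fdelta :: "'x \<Rightarrow> 'x \<Rightarrow> 'k::{zero,one}" where
  "fdelta x = (\<lambda>y. if y = x then 1 else 0)"

definition fadd :: "('x \<Rightarrow> 'k::plus) \<Rightarrow> ('x \<Rightarrow> 'k) \<Rightarrow> 'x \<Rightarrow> 'k" where
  "fadd f g = (\<lambda>x. f x + g x)"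

definition fscal :: "'k::times \<Rightarrow> ('x \<Rightarrow> 'k) \<Rightarrow> 'x \<Rightarrow> 'k" where
  "fscal k f = (\<lambda>x. k * f x)"

definition fspan :: "('x \<Rightarrow> 'k::comm_ring_1) set \<Rightarrow> ('x \<Rightarrow> 'k) set" where
  "fspan S = {f. \<exists>T r. finite T \<and> T \<subseteq> S \<and> f = (\<lambda>x. \<Sum>s\<in>T. r s * s x)}"

definition teq :: "('x \<Rightarrow> 'k::comm_ring_1) set \<Rightarrow> ('x \<Rightarrow> 'k) \<Rightarrow> ('x \<Rightarrow> 'k) \<Rightarrow> bool" where
  "teq R f g \<longleftrightarrow> (\<lambda>x. f x - g x) \<in> fspan R"

text \<open>Linearity relations in one slot (g inserts a vector into the slot).\<close>
definition linrels :: "('a \<Rightarrow> 'x) \<Rightarrow> ('k::comm_ring_1 \<Rightarrow> 'a::plus \<Rightarrow> 'a) \<Rightarrow> ('x \<Rightarrow> 'k) set" where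
  "linrels g s =
     {(\<lambda>y. fdelta (g (a + a')) y - fdelta (g a) y - fdelta (g a') y) | a a'. True}
   \<union> {(\<lambda>y. fdelta (g (s k a)) y - k * fdelta (g a) y) | k a. True}"

definition rels2 :: "('k::comm_ring_1 \<Rightarrow> 'a::plus \<Rightarrow> 'a) \<Rightarrow> ('k \<Rightarrow> 'b::plus \<Rightarrow> 'b)
    \<Rightarrow> ('a \<times> 'b \<Rightarrow> 'k) set" where
  "rels2 sA sB = (\<Union>b. linrels (\<lambda>a. (a, b)) sA) \<union> (\<Union>a. linrels (\<lambda>b. (a, b)) sB)"

definition rels3 :: "('k::comm_ring_1 \<Rightarrow> 'a::plus \<Rightarrow> 'a) \<Rightarrow> ('k \<Rightarrow> 'b::plus \<Rightarrow> 'b)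
    \<Rightarrow> ('k \<Rightarrow> 'c::plus \<Rightarrow> 'c) \<Rightarrow> ('a \<times> 'b \<times> 'c \<Rightarrow> 'k) set" where
  "rels3 sA sB sC =
     (\<Union>b c. linrels (\<lambda>a. (a, b, c)) sA) \<union> (\<Union>a c. linrels (\<lambda>b. (a, b, c)) sB)
   \<union> (\<Union>a b. linrels (\<lambda>c. (a, b, c)) sC)"

definition balrels2 :: "'p::times set \<Rightarrow> ('p \<times> 'p \<Rightarrow> 'k::comm_ring_1) set" where
  "balrels2 B = {(\<lambda>z. fdelta (x * b, y) z - fdelta (x, b * y) z) | x y b. b \<in> B}"

definition balrels3 :: "'p::times set \<Rightarrow> ('h \<times> 'p \<times> 'p \<Rightarrow> 'k::comm_ring_1) set" where
  "balrels3 B = {(\<lambda>z. fdelta (h, x * b, y) z - fdelta (h, x, b * y) z) | h x y b. b \<in> B}"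

text \<open>Relations of P (x)_B P and of H (x)_K (P (x)_B P).\<close>
definition relsPBP :: "('k::comm_ring_1 \<Rightarrow> 'p::{plus,times} \<Rightarrow> 'p) \<Rightarrow> 'p set \<Rightarrow> ('p \<times> 'p \<Rightarrow> 'k) set" where
  "relsPBP sP B = rels2 sP sP \<union> balrels2 B"

definition relsHPBP :: "('k::comm_ring_1 \<Rightarrow> 'h::plus \<Rightarrow> 'h) \<Rightarrow> ('k \<Rightarrow> 'p::{plus,times} \<Rightarrow> 'p)
    \<Rightarrow> 'p set \<Rightarrow> ('h \<times> 'p \<times> 'p \<Rightarrow> 'k) set" where
  "relsHPBP sH sP B = rels3 sH sP sP \<union> balrels3 B"

definition fext :: "('x \<Rightarrow> 'y \<Rightarrow> 'k::comm_ring_1) \<Rightarrow> ('x \<Rightarrow> 'k) \<Rightarrow> 'y \<Rightarrow> 'k" where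
  "fext \<phi> f = (\<lambda>y. \<Sum>x\<in>supp f. f x * \<phi> x y)"

definition fmap :: "('x \<Rightarrow> 'y) \<Rightarrow> ('x \<Rightarrow> 'k::comm_ring_1) \<Rightarrow> 'y \<Rightarrow> 'k" where
  "fmap h f = (\<lambda>y. \<Sum>x\<in>{x\<in>supp f. h x = y}. f x)"

definition ftens :: "('a \<Rightarrow> 'k::comm_ring_1) \<Rightarrow> ('b \<Rightarrow> 'k) \<Rightarrow> 'a \<times> 'b \<Rightarrow> 'k" where
  "ftens f g = (\<lambda>(a, b). f a * g b)"

text \<open>(phi (x) id) t, reassociated to a1 (x) a2 (x) b.\<close>
definition tens_left :: "('a \<Rightarrow> 'a1 \<times> 'a2 \<Rightarrow> 'k::comm_ring_1) \<Rightarrow> ('a \<times> 'b \<Rightarrow> 'k) \<Rightarrow> 'a1 \<times> 'a2 \<times> 'b \<Rightarrow> 'k" where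
  "tens_left \<phi> t = fext (\<lambda>(a, b). fmap (\<lambda>((a1, a2), b'). (a1, a2, b')) (ftens (\<phi> a) (fdelta b))) t"

text \<open>(id (x) psi) t.\<close>
definition tens_right :: "('b \<Rightarrow> 'b1 \<times> 'b2 \<Rightarrow> 'k::comm_ring_1) \<Rightarrow> ('a \<times> 'b \<Rightarrow> 'k) \<Rightarrow> 'a \<times> 'b1 \<times> 'b2 \<Rightarrow> 'k" where
  "tens_right \<psi> t = fext (\<lambda>(a, b). ftens (fdelta a) (\<psi> b)) t"

definition tmul :: "('a::times \<times> 'b::times \<Rightarrow> 'k::comm_ring_1) \<Rightarrow> ('a \<times> 'b \<Rightarrow> 'k) \<Rightarrow> 'a \<times> 'b \<Rightarrow> 'k" where
  "tmul f g = fmap (\<lambda>((a, b), (a', b')). (a * a', b * b')) (ftens f g)"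

definition lin_fun :: "('k::field \<Rightarrow> 'a::plus \<Rightarrow> 'a) \<Rightarrow> ('a \<Rightarrow> 'k) \<Rightarrow> bool" where
  "lin_fun s e \<longleftrightarrow> (\<forall>x y. e (x + y) = e x + e y) \<and> (\<forall>k x. e (s k x) = k * e x)"

definition lin_map :: "('k::field \<Rightarrow> 'a::plus \<Rightarrow> 'a) \<Rightarrow> ('k \<Rightarrow> 'b::plus \<Rightarrow> 'b) \<Rightarrow> ('a \<Rightarrow> 'b) \<Rightarrow> bool" where
  "lin_map s s' f \<longleftrightarrow> (\<forall>x y. f (x + y) = f x + f y) \<and> (\<forall>k x. f (s k x) = s' k (f x))"

text \<open>A K-linear map into a tensor product, given by representatives.\<close>
definition lin_mod :: "('x \<Rightarrow> 'k::field) set \<Rightarrow> ('k \<Rightarrow> 'a::plus \<Rightarrow> 'a) \<Rightarrow> ('a \<Rightarrow> 'x \<Rightarrow> 'k) \<Rightarrow> bool" where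
  "lin_mod R s \<phi> \<longleftrightarrow> (\<forall>x. finite (supp (\<phi> x)))
     \<and> (\<forall>x y. teq R (\<phi> (x + y)) (fadd (\<phi> x) (\<phi> y)))
     \<and> (\<forall>k x. teq R (\<phi> (s k x)) (fscal k (\<phi> x)))"

text \<open>Associative unital K-algebra (ring structure from the type class).\<close>
definition k_algebra :: "('k::field \<Rightarrow> 'a::{ring,monoid_mult} \<Rightarrow> 'a) \<Rightarrow> bool" where
  "k_algebra s \<longleftrightarrow> vector_space s \<and> (\<forall>k x y. s k (x * y) = s k x * y \<and> s k (x * y) = x * s k y)"

definition coalgebra :: "('k::field \<Rightarrow> 'c::ab_group_add \<Rightarrow> 'c) \<Rightarrow> ('c \<Rightarrow> 'c \<times> 'c \<Rightarrow> 'k) \<Rightarrow> ('c \<Rightarrow> 'k) \<Rightarrow> bool" where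
  "coalgebra s \<Delta> \<epsilon> \<longleftrightarrow> vector_space s \<and> lin_fun s \<epsilon> \<and> lin_mod (rels2 s s) s \<Delta>
     \<and> (\<forall>x. teq (rels3 s s s) (tens_left \<Delta> (\<Delta> x)) (tens_right \<Delta> (\<Delta> x)))
     \<and> (\<forall>x. (\<Sum>z\<in>supp (\<Delta> x). s (\<Delta> x z * \<epsilon> (fst z)) (snd z)) = x)
     \<and> (\<forall>x. (\<Sum>z\<in>supp (\<Delta> x). s (\<Delta> x z * \<epsilon> (snd z)) (fst z)) = x)"

definition bialgebra :: "('k::field \<Rightarrow> 'h::{ring,monoid_mult} \<Rightarrow> 'h) \<Rightarrow> ('h \<Rightarrow> 'h \<times> 'h \<Rightarrow> 'k) \<Rightarrow> ('h \<Rightarrow> 'k) \<Rightarrow> bool" where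
  "bialgebra s \<Delta> \<epsilon> \<longleftrightarrow> k_algebra s \<and> coalgebra s \<Delta> \<epsilon>
     \<and> (\<forall>x y. teq (rels2 s s) (\<Delta> (x * y)) (tmul (\<Delta> x) (\<Delta> y)))
     \<and> teq (rels2 s s) (\<Delta> 1) (fdelta (1, 1))
     \<and> (\<forall>x y. \<epsilon> (x * y) = \<epsilon> x * \<epsilon> y) \<and> \<epsilon> 1 = 1"

definition antipode :: "('k::field \<Rightarrow> 'h::{ring,monoid_mult} \<Rightarrow> 'h) \<Rightarrow> ('h \<Rightarrow> 'h \<times> 'h \<Rightarrow> 'k) \<Rightarrow> ('h \<Rightarrow> 'k) \<Rightarrow> ('h \<Rightarrow> 'h) \<Rightarrow> bool" where
  "antipode s \<Delta> \<epsilon> S \<longleftrightarrow> lin_map s s S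
     \<and> (\<forall>x. (\<Sum>z\<in>supp (\<Delta> x). s (\<Delta> x z) (S (fst z) * snd z)) = s (\<epsilon> x) 1)
     \<and> (\<forall>x. (\<Sum>z\<in>supp (\<Delta> x). s (\<Delta> x z) (fst z * S (snd z))) = s (\<epsilon> x) 1)"

definition left_comodule :: "('k::field \<Rightarrow> 'h::ab_group_add \<Rightarrow> 'h) \<Rightarrow> ('h \<Rightarrow> 'h \<times> 'h \<Rightarrow> 'k) \<Rightarrow> ('h \<Rightarrow> 'k)
    \<Rightarrow> ('k \<Rightarrow> 'p::ab_group_add \<Rightarrow> 'p) \<Rightarrow> ('p \<Rightarrow> 'h \<times> 'p \<Rightarrow> 'k) \<Rightarrow> bool" where
  "left_comodule sH \<Delta> \<epsilon> sP \<rho> \<longleftrightarrow> vector_space sP \<and> lin_mod (rels2 sH sP) sP \<rho>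
     \<and> (\<forall>x. teq (rels3 sH sH sP) (tens_left \<Delta> (\<rho> x)) (tens_right \<rho> (\<rho> x)))
     \<and> (\<forall>x. (\<Sum>z\<in>supp (\<rho> x). sP (\<rho> x z * \<epsilon> (fst z)) (snd z)) = x)"

definition right_comodule :: "('k::field \<Rightarrow> 'c::ab_group_add \<Rightarrow> 'c) \<Rightarrow> ('c \<Rightarrow> 'c \<times> 'c \<Rightarrow> 'k) \<Rightarrow> ('c \<Rightarrow> 'k)
    \<Rightarrow> ('k \<Rightarrow> 'p::ab_group_add \<Rightarrow> 'p) \<Rightarrow> ('p \<Rightarrow> 'p \<times> 'c \<Rightarrow> 'k) \<Rightarrow> bool" where
  "right_comodule sC \<Delta> \<epsilon> sP \<rho> \<longleftrightarrow> vector_space sP \<and> lin_mod (rels2 sP sC) sP \<rho>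
     \<and> (\<forall>x. teq (rels3 sP sC sC) (tens_left \<rho> (\<rho> x)) (tens_right \<Delta> (\<rho> x)))
     \<and> (\<forall>x. (\<Sum>z\<in>supp (\<rho> x). sP (\<rho> x z * \<epsilon> (snd z)) (fst z)) = x)"

definition bicomodule :: "('k::field \<Rightarrow> 'h::ab_group_add \<Rightarrow> 'h) \<Rightarrow> ('h \<Rightarrow> 'h \<times> 'h \<Rightarrow> 'k) \<Rightarrow> ('h \<Rightarrow> 'k)
    \<Rightarrow> ('k \<Rightarrow> 'c::ab_group_add \<Rightarrow> 'c) \<Rightarrow> ('c \<Rightarrow> 'c \<times> 'c \<Rightarrow> 'k) \<Rightarrow> ('c \<Rightarrow> 'k)
    \<Rightarrow> ('k \<Rightarrow> 'p::ab_group_add \<Rightarrow> 'p) \<Rightarrow> ('p \<Rightarrow> 'h \<times> 'p \<Rightarrow> 'k) \<Rightarrow> ('p \<Rightarrow> 'p \<times> 'c \<Rightarrow> 'k) \<Rightarrow> bool" where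
  "bicomodule sH \<Delta>H \<epsilon>H sC \<Delta>C \<epsilon>C sP \<rho>H \<rho>C \<longleftrightarrow>
     left_comodule sH \<Delta>H \<epsilon>H sP \<rho>H \<and> right_comodule sC \<Delta>C \<epsilon>C sP \<rho>C
     \<and> (\<forall>x. teq (rels3 sH sP sC) (tens_right \<rho>C (\<rho>H x)) (tens_left \<rho>H (\<rho>C x)))"

definition coaction_alg_map :: "('k::field \<Rightarrow> 'h::{ring,monoid_mult} \<Rightarrow> 'h) \<Rightarrow> ('k \<Rightarrow> 'p::{ring,monoid_mult} \<Rightarrow> 'p)
    \<Rightarrow> ('p \<Rightarrow> 'h \<times> 'p \<Rightarrow> 'k) \<Rightarrow> bool" where
  "coaction_alg_map sH sP \<rho> \<longleftrightarrow> (\<forall>x y. teq (rels2 sH sP) (\<rho> (x * y)) (tmul (\<rho> x) (\<rho> y)))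
     \<and> teq (rels2 sH sP) (\<rho> 1) (fdelta (1, 1))"

definition coinvH :: "('k::field \<Rightarrow> 'h::{ring,monoid_mult} \<Rightarrow> 'h) \<Rightarrow> ('k \<Rightarrow> 'p::{ring,monoid_mult} \<Rightarrow> 'p)
    \<Rightarrow> ('p \<Rightarrow> 'h \<times> 'p \<Rightarrow> 'k) \<Rightarrow> 'p set" where
  "coinvH sH sP \<rho> = {p. teq (rels2 sH sP) (\<rho> p) (fdelta (1, p))}"

definition lmulPC :: "'p::times \<Rightarrow> ('p \<times> 'c \<Rightarrow> 'k::comm_ring_1) \<Rightarrow> 'p \<times> 'c \<Rightarrow> 'k" where
  "lmulPC b u = fmap (\<lambda>(q, c). (b * q, c)) u"

definition coinvC :: "('k::field \<Rightarrow> 'c::ab_group_add \<Rightarrow> 'c) \<Rightarrow> ('k \<Rightarrow> 'p::{ring,monoid_mult} \<Rightarrow> 'p)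
    \<Rightarrow> ('p \<Rightarrow> 'p \<times> 'c \<Rightarrow> 'k) \<Rightarrow> 'p set" where
  "coinvC sC sP \<rho> = {b. \<forall>p. teq (rels2 sP sC) (\<rho> (b * p)) (lmulPC b (\<rho> p))}"

definition can :: "('p::{ring,monoid_mult} \<Rightarrow> 'p \<times> 'c \<Rightarrow> 'k::field) \<Rightarrow> ('p \<times> 'p \<Rightarrow> 'k) \<Rightarrow> 'p \<times> 'c \<Rightarrow> 'k" where
  "can \<rho> t = fext (\<lambda>(x, y). lmulPC x (\<rho> y)) t"

definition galois :: "('k::field \<Rightarrow> 'c::ab_group_add \<Rightarrow> 'c) \<Rightarrow> ('k \<Rightarrow> 'p::{ring,monoid_mult} \<Rightarrow> 'p)
    \<Rightarrow> ('p \<Rightarrow> 'p \<times> 'c \<Rightarrow> 'k) \<Rightarrow> bool" where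
  "galois sC sP \<rho> \<longleftrightarrow>
     (\<forall>t t'. finite (supp t) \<and> finite (supp t') \<and> teq (rels2 sP sC) (can \<rho> t) (can \<rho> t')
        \<longrightarrow> teq (relsPBP sP (coinvC sC sP \<rho>)) t t')
   \<and> (\<forall>u. finite (supp u) \<longrightarrow> (\<exists>t. finite (supp t) \<and> teq (rels2 sP sC) (can \<rho> t) u))"

end

theory Submission
  imports Defs "HOL-Library.Function_Algebras"
begin

definition fsc :: "'k::field \<Rightarrow> ('x \<Rightarrow> 'k) \<Rightarrow> 'x \<Rightarrow> 'k" where
  "fsc k f = (\<lambda>x. k * f x)"

interpretation FM: module "fsc :: 'k::field \<Rightarrow> ('x \<Rightarrow> 'k) \<Rightarrow> 'x \<Rightarrow> 'k"
  by unfold_locales (auto simp: fsc_def fun_eq_iff algebra_simps)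

lemma sum_fun_apply: "(\<Sum>a\<in>T. f a) x = (\<Sum>a\<in>T. f a x)"
  by (induct T rule: infinite_finite_induct) auto

lemma fsc_apply: "fsc k f x = k * f x" by (simp add: fsc_def)

lemma fspan_eq: "fspan S = FM.span S"
  unfolding fspan_def FM.span_explicit
  by (auto simp: fun_eq_iff sum_fun_apply fsc_apply)

lemma teq_span: "teq R f g \<longleftrightarrow> f - g \<in> FM.span R"
  by (simp add: teq_def fspan_eq fun_diff_def)

lemma teq_refl[simp]: "teq (R::('x \<Rightarrow> 'k::field) set) f f"
  by (simp add: teq_span FM.span_zero)

lemma teq_sym: "teq (R::('x \<Rightarrow> 'k::field) set) f g \<Longrightarrow> teq R g f"
  unfolding teq_span by (metis FM.span_neg minus_diff_eq)

lemma teq_trans: "teq (R::('x \<Rightarrow> 'k::field) set) f g \<Longrightarrow> teq R g h \<Longrightarrow> teq R f h"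
proof -
  assume a: "teq R f g" "teq R g h"
  have "f - h = (f - g) + (g - h)" by simp
  then show ?thesis using a unfolding teq_span by (metis FM.span_add)
qed

lemma teq_add: "teq (R::('x \<Rightarrow> 'k::field) set) f f' \<Longrightarrow> teq R g g' \<Longrightarrow> teq R (f + g) (f' + g')"
proof -
  assume a: "teq R f f'" "teq R g g'"
  have "f + g - (f' + g') = (f - f') + (g - g')" by (simp add: algebra_simps)
  then show ?thesis using a unfolding teq_span by (metis FM.span_add)
qed

lemma teq_diff: "teq (R::('x \<Rightarrow> 'k::field) set) f f' \<Longrightarrow> teq R g g' \<Longrightarrow> teq R (f - g) (f' - g')"
proof -
  assume a: "teq R f f'" "teq R g g'"
  have "f - g - (f' - g') = (f - f') - (g - g')" by (simp add: algebra_simps)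
  then show ?thesis using a unfolding teq_span by (metis FM.span_diff)
qed

lemma fsc_diff: "fsc k f - fsc k g = fsc k (f - g)"
  by (simp add: fun_eq_iff algebra_simps)

lemma teq_fsc: "teq R f g \<Longrightarrow> teq R (fsc k f) (fsc k g)"
  unfolding teq_span by (metis FM.span_scale fsc_diff)

lemma teq_zero_iff: "teq (R::('x \<Rightarrow> 'k::field) set) f g \<longleftrightarrow> teq R (f - g) 0"
  by (simp add: teq_span)

lemma teq_base: "f - g \<in> (R::('x \<Rightarrow> 'k::field) set) \<Longrightarrow> teq R f g"
  by (simp add: teq_span FM.span_base)

lemma fun_zero_eq[simp]: "(\<lambda>x. 0) = 0" by (simp add: fun_eq_iff)

abbreviation fin :: "('x \<Rightarrow> 'k::zero) \<Rightarrow> bool" where "fin f \<equiv> finite (supp f)"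

lemma supp_add: "supp (f + (g::'x \<Rightarrow> 'k::ab_group_add)) \<subseteq> supp f \<union> supp g"
  by (auto simp: supp_def)
lemma supp_diff: "supp (f - (g::'x \<Rightarrow> 'k::ab_group_add)) \<subseteq> supp f \<union> supp g"
  by (auto simp: supp_def)
lemma supp_fsc: "supp (fsc k (f::'x \<Rightarrow> 'k::field)) \<subseteq> supp f"
  by (auto simp: supp_def fsc_apply)
lemma supp_zero[simp]: "supp (0::'x \<Rightarrow> 'k::zero) = {}" by (auto simp: supp_def)
lemma supp_fdelta: "supp (fdelta a :: 'x \<Rightarrow> 'k::zero_neq_one) \<subseteq> {a}" by (auto simp: supp_def fdelta_def)

lemma fin_add: "fin (f::'x \<Rightarrow> 'k::ab_group_add) \<Longrightarrow> fin g \<Longrightarrow> fin (f + g)"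
  by (meson finite_UnI finite_subset supp_add)
lemma fin_diff: "fin (f::'x \<Rightarrow> 'k::ab_group_add) \<Longrightarrow> fin g \<Longrightarrow> fin (f - g)"
  by (meson finite_UnI finite_subset supp_diff)
lemma fin_fsc: "fin (f::'x \<Rightarrow> 'k::field) \<Longrightarrow> fin (fsc k f)"
  by (meson finite_subset supp_fsc)
lemma fin_fdelta[simp]: "fin (fdelta a :: 'x \<Rightarrow> 'k::zero_neq_one)"
  by (meson finite.emptyI finite_insert finite_subset supp_fdelta)
lemma fin_sum: "finite A \<Longrightarrow> (\<And>a. a \<in> A \<Longrightarrow> fin (g a)) \<Longrightarrow> fin (\<Sum>a\<in>A. g a :: 'x \<Rightarrow> 'k::ab_group_add)"
  by (induct A rule: finite_induct) (auto intro: fin_add)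

lemma fext_superset: "finite (A::'x set) \<Longrightarrow> supp f \<subseteq> A \<Longrightarrow> fext \<phi> f = (\<lambda>y. \<Sum>x\<in>A. f x * \<phi> x y)"
  unfolding fext_def by (auto simp: fun_eq_iff supp_def intro!: sum.mono_neutral_left)

lemma fext_as_sum: "fext \<phi> f = (\<Sum>x\<in>supp f. fsc (f x) (\<phi> x))"
  by (simp add: fext_def fun_eq_iff sum_fun_apply fsc_apply)

lemma fext_add: "fin (f::'x \<Rightarrow> 'k::field) \<Longrightarrow> fin g \<Longrightarrow> fext \<phi> (f + g) = fext \<phi> f + fext \<phi> g"
proof -
  assume a: "fin f" "fin g"
  let ?A = "supp f \<union> supp g"
  have "fext \<phi> (f + g) = (\<lambda>y. \<Sum>x\<in>?A. (f + g) x * \<phi> x y)"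
    using a supp_add[of f g] by (intro fext_superset) auto
  moreover have "fext \<phi> f = (\<lambda>y. \<Sum>x\<in>?A. f x * \<phi> x y)"
    using a by (intro fext_superset) auto
  moreover have "fext \<phi> g = (\<lambda>y. \<Sum>x\<in>?A. g x * \<phi> x y)"
    using a by (intro fext_superset) auto
  ultimately show ?thesis by (simp add: fun_eq_iff algebra_simps sum.distrib)
qed

lemma fext_diff: "fin (f::'x \<Rightarrow> 'k::field) \<Longrightarrow> fin g \<Longrightarrow> fext \<phi> (f - g) = fext \<phi> f - fext \<phi> g"
proof -
  assume a: "fin f" "fin g"
  let ?A = "supp f \<union> supp g"
  have "fext \<phi> (f - g) = (\<lambda>y. \<Sum>x\<in>?A. (f - g) x * \<phi> x y)"
    using a supp_diff[of f g] by (intro fext_superset) auto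
  moreover have "fext \<phi> f = (\<lambda>y. \<Sum>x\<in>?A. f x * \<phi> x y)"
    using a by (intro fext_superset) auto
  moreover have "fext \<phi> g = (\<lambda>y. \<Sum>x\<in>?A. g x * \<phi> x y)"
    using a by (intro fext_superset) auto
  ultimately show ?thesis by (simp add: fun_eq_iff algebra_simps sum_subtractf)
qed

lemma fext_fsc: "fin (f::'x \<Rightarrow> 'k::field) \<Longrightarrow> fext \<phi> (fsc k f) = fsc k (fext \<phi> f)"
proof -
  assume a: "fin f"
  have "fext \<phi> (fsc k f) = (\<lambda>y. \<Sum>x\<in>supp f. (fsc k f) x * \<phi> x y)"
    using a supp_fsc[of k f] by (intro fext_superset) auto
  then show ?thesis by (simp add: fun_eq_iff fext_def sum_distrib_left algebra_simps fsc_apply)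
qed

lemma fext_zero[simp]: "fext \<phi> (0::'x \<Rightarrow> 'k::field) = 0"
  by (simp add: fext_def fun_eq_iff)

lemma fext_sum: "finite (A::'a set) \<Longrightarrow> (\<And>a. a \<in> A \<Longrightarrow> fin (g a)) \<Longrightarrow> fext \<psi> (\<Sum>a\<in>A. g a :: 'x \<Rightarrow> 'k::field) = (\<Sum>a\<in>A. fext \<psi> (g a))"
  by (induct A rule: finite_induct) (auto simp: fext_add fin_sum)

lemma fext_fdelta[simp]: "fext \<phi> (fdelta a) = \<phi> a"
proof -
  have "fext \<phi> (fdelta a) = (\<lambda>y. \<Sum>x\<in>{a}. fdelta a x * \<phi> x y)"
    using supp_fdelta[of a] by (intro fext_superset) auto
  then show ?thesis by (simp add: fdelta_def)
qed

lemma fin_fext: "fin (f::'x \<Rightarrow> 'k::field) \<Longrightarrow> (\<And>x. x \<in> supp f \<Longrightarrow> fin (\<phi> x)) \<Longrightarrow> fin (fext \<phi> f)"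
  unfolding fext_as_sum by (intro fin_sum fin_fsc) auto

lemma fext_id: "fin (f::'x \<Rightarrow> 'k::field) \<Longrightarrow> fext fdelta f = f"
proof -
  assume a: "fin f"
  show ?thesis
  proof
    fix y
    show "fext fdelta f y = f y"
    proof (cases "y \<in> supp f")
      case True
      then have "fext fdelta f y = (\<Sum>x\<in>supp f. f x * fdelta x y)" by (simp add: fext_def)
      also have "\<dots> = (\<Sum>x\<in>{y}. f x * fdelta x y)"
        using a True by (intro sum.mono_neutral_right) (auto simp: fdelta_def)
      finally show ?thesis by (simp add: fdelta_def)
    next
      case False
      then show ?thesis by (auto simp: fext_def fdelta_def supp_def intro!: sum.neutral)
    qed
  qed
qed

lemma fext_comp: "fin (f::'x \<Rightarrow> 'k::field) \<Longrightarrow> (\<And>x. x \<in> supp f \<Longrightarrow> fin (\<phi> x)) \<Longrightarrow>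
   fext \<psi> (fext \<phi> f) = fext (\<lambda>x. fext \<psi> (\<phi> x)) f"
  unfolding fext_as_sum[of \<phi>] fext_as_sum[of "\<lambda>x. fext \<psi> (\<phi> x)"]
  by (subst fext_sum) (auto intro: fin_fsc simp: fext_fsc)

lemma fext_cong: "(\<And>x. x \<in> supp f \<Longrightarrow> \<phi> x = \<psi> x) \<Longrightarrow> fext \<phi> f = fext \<psi> f"
  unfolding fext_def by (auto simp: fun_eq_iff intro!: sum.cong)

lemma fext_in_span: "(\<And>x. x \<in> supp (f::'x \<Rightarrow> 'k::field) \<Longrightarrow> \<phi> x \<in> FM.span R) \<Longrightarrow> fext \<phi> f \<in> FM.span R"
  unfolding fext_as_sum by (intro FM.span_sum FM.span_scale) auto

lemma fext_cong_teq: "(\<And>x. x \<in> supp (f::'x \<Rightarrow> 'k::field) \<Longrightarrow> teq R (\<phi> x) (\<psi> x)) \<Longrightarrow> teq R (fext \<phi> f) (fext \<psi> f)"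
proof -
  assume a: "\<And>x. x \<in> supp f \<Longrightarrow> teq R (\<phi> x) (\<psi> x)"
  have "fext \<phi> f - fext \<psi> f = fext (\<lambda>x. \<phi> x - \<psi> x) f"
    by (simp add: fext_def fun_eq_iff algebra_simps sum_subtractf)
  moreover have "fext (\<lambda>x. \<phi> x - \<psi> x) f \<in> FM.span R"
    using a by (intro fext_in_span) (simp add: teq_span)
  ultimately show ?thesis by (simp add: teq_span)
qed

definition finrels :: "('x \<Rightarrow> 'k::field) set \<Rightarrow> bool" where
  "finrels R \<longleftrightarrow> (\<forall>r\<in>R. fin r)"

definition resp :: "('x \<Rightarrow> 'y \<Rightarrow> 'k::field) \<Rightarrow> ('x \<Rightarrow> 'k) set \<Rightarrow> ('y \<Rightarrow> 'k) set \<Rightarrow> bool" where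
  "resp \<phi> R R' \<longleftrightarrow> (\<forall>r\<in>R. fext \<phi> r \<in> FM.span R')"

lemma span_fin: "finrels R \<Longrightarrow> v \<in> FM.span R \<Longrightarrow> fin v"
proof -
  assume a: "finrels R" "v \<in> FM.span R"
  from a(2) show ?thesis
  proof (induct rule: FM.span_induct_alt)
    case base then show ?case by simp
  next
    case (step c x y)
    then have "fin x" using a(1) by (auto simp: finrels_def)
    then show ?case using step by (intro fin_add fin_fsc)
  qed
qed

lemma fext_resp:
  assumes "finrels R" "resp \<phi> R R'" "fin f" "fin g" "teq R f g"
  shows "teq R' (fext \<phi> f) (fext \<phi> g)"
proof -
  have "f - g \<in> FM.span R" using assms(5) by (simp add: teq_span)
  then have "fin (f - g) \<and> fext \<phi> (f - g) \<in> FM.span R'"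
  proof (induct rule: FM.span_induct_alt)
    case base then show ?case by (simp add: FM.span_zero)
  next
    case (step c x y)
    have "fin x" using step(1) assms(1) by (simp add: finrels_def)
    moreover have "fin y" using step(2) by simp
    ultimately have "fext \<phi> (fsc c x + y) = fsc c (fext \<phi> x) + fext \<phi> y"
      and "fin (fsc c x + y)"
      by (simp_all add: fext_add fin_fsc fext_fsc fin_add)
    moreover have "fext \<phi> x \<in> FM.span R'" using step(1) assms(2) by (simp add: resp_def)
    ultimately have "fin (fsc c x + y) \<and> fext \<phi> (fsc c x + y) \<in> FM.span R'"
      using step(2) by (simp add: FM.span_add FM.span_scale)
    then show ?case by (simp add: plus_fun_def)
  qed
  then show ?thesis using assms(3,4) by (simp add: teq_span fext_diff)
qed

lemma fmap_fext: "fin (f::'x \<Rightarrow> 'k::field) \<Longrightarrow> fmap h f = fext (\<lambda>x. fdelta (h x)) f"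
  unfolding fmap_def fext_def fdelta_def
  by (auto simp: fun_eq_iff sum.inter_filter eq_commute intro!: sum.cong)

lemma supp_ftens: "supp (ftens a (b::'y \<Rightarrow> 'k::field)) \<subseteq> supp a \<times> supp b"
  by (auto simp: supp_def ftens_def)

lemma fin_ftens: "fin (a::'x \<Rightarrow> 'k::field) \<Longrightarrow> fin b \<Longrightarrow> fin (ftens a b)"
  by (rule finite_subset[OF supp_ftens]) auto

lemma fext_ftens: "fin (a::'x \<Rightarrow> 'k::field) \<Longrightarrow> fin b \<Longrightarrow> fext \<psi> (ftens a b) = fext (\<lambda>u. fext (\<lambda>v. \<psi> (u, v)) b) a"
proof -
  assume a: "fin a" "fin b"
  have "fext \<psi> (ftens a b) = (\<lambda>y. \<Sum>x\<in>supp a \<times> supp b. ftens a b x * \<psi> x y)"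
    using a supp_ftens[of a b] by (intro fext_superset) auto
  also have "\<dots> = fext (\<lambda>u. fext (\<lambda>v. \<psi> (u, v)) b) a"
    by (simp add: fun_eq_iff fext_def sum.cartesian_product' ftens_def sum_distrib_left
        algebra_simps)
  finally show ?thesis .
qed

lemma fext_swap: "fext (\<lambda>u. fext (\<lambda>v. \<psi> u v) g) f = fext (\<lambda>v. fext (\<lambda>u. \<psi> u v) f) g"
  by (simp add: fun_eq_iff fext_def sum_distrib_left algebra_simps sum.swap[of _ "supp f"])

lemma fext_lin3: "fext (\<phi>::_ \<Rightarrow> _ \<Rightarrow> 'k::field) (\<lambda>y. fdelta a y - fdelta b y - fdelta c y) = (\<lambda>y. \<phi> a y - \<phi> b y - \<phi> c y)"
proof -
  have "(\<lambda>y. fdelta a y - fdelta b y - fdelta c y) = fdelta a - fdelta b - fdelta c"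
    by (simp add: fun_eq_iff)
  then have "fext \<phi> (\<lambda>y. fdelta a y - fdelta b y - fdelta c y) = fext \<phi> (fdelta a - fdelta b - fdelta c)"
    by (rule arg_cong)
  also have "\<dots> = \<phi> a - \<phi> b - \<phi> c"
    by (simp add: fext_diff fin_diff)
  finally have "fext \<phi> (\<lambda>y. fdelta a y - fdelta b y - fdelta c y) = \<phi> a - \<phi> b - \<phi> c" .
  then show ?thesis by (simp add: fun_diff_def)
qed

lemma fext_lin2: "fext (\<phi>::_ \<Rightarrow> _ \<Rightarrow> 'k::field) (\<lambda>y. fdelta a y - k * fdelta b y) = (\<lambda>y. \<phi> a y - k * \<phi> b y)"
proof -
  have "(\<lambda>y. fdelta a y - k * fdelta b y) = fdelta a - fsc k (fdelta b)"
    by (simp add: fun_eq_iff fsc_apply)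
  then have "fext \<phi> (\<lambda>y. fdelta a y - k * fdelta b y) = fext \<phi> (fdelta a - fsc k (fdelta b))"
    by (rule arg_cong)
  also have "\<dots> = \<phi> a - fsc k (\<phi> b)"
    by (simp add: fext_diff fin_diff fin_fsc fext_fsc)
  finally have "fext \<phi> (\<lambda>y. fdelta a y - k * fdelta b y) = \<phi> a - fsc k (\<phi> b)" .
  then show ?thesis by (simp add: fun_eq_iff fsc_apply)
qed

lemma fadd_eq: "fadd f g = f + g" by (simp add: fadd_def plus_fun_def)
lemma fscal_eq: "fscal k f = fsc k f" by (simp add: fscal_def fsc_def)

lemma fext_plus_fun: "fext (\<lambda>v. \<phi> v + \<psi> v) w = fext \<phi> w + fext \<psi> w"
  by (simp add: fext_def fun_eq_iff algebra_simps sum.distrib)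

lemma fext_fsc_fun: "fext (\<lambda>v. fsc k (\<phi> v)) (w::'x \<Rightarrow> 'k::field) = fsc k (fext \<phi> w)"
  by (simp add: fext_def fun_eq_iff algebra_simps sum_distrib_left fsc_apply)

lemma lin3_eq: "(\<lambda>y. fdelta a y - fdelta b y - fdelta c y) = fdelta a - (fdelta b + fdelta c :: _ \<Rightarrow> 'k::field)"
  by (simp add: fun_eq_iff algebra_simps)

lemma bal_eq: "(\<lambda>y. fdelta a y - fdelta b y) = fdelta a - (fdelta b :: _ \<Rightarrow> 'k::field)"
  by (simp add: fun_eq_iff)

declare teq_trans[trans]

lemma lin2_eq: "(\<lambda>y. fdelta a y - k * fdelta b y) = fdelta a - fsc k (fdelta b)"
  by (simp add: fun_eq_iff fsc_apply)

lemma fin_linrels: "r \<in> linrels g s \<Longrightarrow> fin (r :: _ \<Rightarrow> 'k::field)"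
  unfolding linrels_def by (auto simp: lin3_eq lin2_eq intro!: fin_diff fin_add fin_fsc)

lemma finrels_rels2: "finrels (rels2 sA sB :: (_ \<Rightarrow> 'k::field) set)"
  unfolding finrels_def rels2_def by (auto intro: fin_linrels)
lemma finrels_rels3: "finrels (rels3 sA sB sC :: (_ \<Rightarrow> 'k::field) set)"
  unfolding finrels_def rels3_def by (auto intro: fin_linrels)
lemma finrels_relsPBP: "finrels (relsPBP sP B :: (_ \<Rightarrow> 'k::field) set)"
  unfolding finrels_def relsPBP_def
proof
  fix r :: "_ \<Rightarrow> 'k" assume "r \<in> rels2 sP sP \<union> balrels2 B"
  then show "fin r"
  proof
    assume "r \<in> rels2 sP sP" then show ?thesis using finrels_rels2 by (auto simp: finrels_def)
  next
    assume "r \<in> balrels2 B" then show ?thesis unfolding balrels2_def bal_eq by (auto intro!: fin_diff)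
  qed
qed
lemma finrels_relsHPBP: "finrels (relsHPBP sH sP B :: (_ \<Rightarrow> 'k::field) set)"
  unfolding finrels_def relsHPBP_def
proof
  fix r :: "_ \<Rightarrow> 'k" assume "r \<in> rels3 sH sP sP \<union> balrels3 B"
  then show "fin r"
  proof
    assume "r \<in> rels3 sH sP sP" then show ?thesis using finrels_rels3 by (auto simp: finrels_def)
  next
    assume "r \<in> balrels3 B" then show ?thesis unfolding balrels3_def bal_eq by (auto intro!: fin_diff)
  qed
qed

lemma lr2_1: "linrels (\<lambda>a. (a, b)) sA \<subseteq> rels2 sA sB" unfolding rels2_def by auto
lemma lr2_2: "linrels (\<lambda>b. (a, b)) sB \<subseteq> rels2 sA sB" unfolding rels2_def by auto
lemma lr3_1: "linrels (\<lambda>a. (a, b, c)) sA \<subseteq> rels3 sA sB sC" unfolding rels3_def by auto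
lemma lr3_2: "linrels (\<lambda>b. (a, b, c)) sB \<subseteq> rels3 sA sB sC" unfolding rels3_def by auto
lemma lr3_3: "linrels (\<lambda>c. (a, b, c)) sC \<subseteq> rels3 sA sB sC" unfolding rels3_def by auto
lemma rels2_PBP: "rels2 sP sP \<subseteq> relsPBP sP B" unfolding relsPBP_def by (rule Un_upper1)
lemma rels3_HPBP: "rels3 sH sP sP \<subseteq> relsHPBP sH sP B" unfolding relsHPBP_def by (rule Un_upper1)

lemma lin_add: "linrels g s \<subseteq> (R :: (_ \<Rightarrow> 'k::field) set) \<Longrightarrow>
    teq R (fdelta (g (a + a'))) (fdelta (g a) + fdelta (g a'))"
  unfolding linrels_def by (rule teq_base) (auto simp: lin3_eq[symmetric])

lemma lin_scale: "linrels g s \<subseteq> (R :: (_ \<Rightarrow> 'k::field) set) \<Longrightarrow>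
    teq R (fdelta (g (s k a))) (fsc k (fdelta (g a)))"
  unfolding linrels_def by (rule teq_base) (auto simp: lin2_eq[symmetric])

lemma lin_zero: "linrels g s \<subseteq> (R :: (_ \<Rightarrow> 'k::field) set) \<Longrightarrow>
    teq R 0 (fdelta (g (0::'a::monoid_add)))"
proof -
  assume a: "linrels g s \<subseteq> R"
  have "teq R (fdelta (g (0 + 0))) (fdelta (g 0) + fdelta (g 0))" by (rule lin_add[OF a])
  then have "fdelta (g 0) - (fdelta (g 0) + fdelta (g 0)) \<in> FM.span R" by (simp add: teq_span)
  then have "- (fdelta (g 0)) \<in> FM.span R" by (simp add: algebra_simps)
  then have "fdelta (g 0) \<in> FM.span R" using FM.span_neg by fastforce
  then show ?thesis by (simp add: teq_span FM.span_neg)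
qed

lemma lin_collect:
  assumes "linrels g s \<subseteq> (R :: (_ \<Rightarrow> 'k::field) set)" "finite A"
  shows "teq R (\<Sum>z\<in>A. fsc (c z) (fdelta (g (v z)))) (fdelta (g (\<Sum>z\<in>A. s (c z) (v z) :: 'a::comm_monoid_add)))"
  using assms(2)
proof (induct A rule: finite_induct)
  case empty then show ?case using lin_zero[OF assms(1)] by simp
next
  case (insert z A)
  have "teq R (fsc (c z) (fdelta (g (v z))) + (\<Sum>z\<in>A. fsc (c z) (fdelta (g (v z)))))
             (fdelta (g (s (c z) (v z))) + fdelta (g (\<Sum>z\<in>A. s (c z) (v z))))"
    by (rule teq_add[OF teq_sym[OF lin_scale[OF assms(1)]] insert(3)])
  also have "teq R \<dots> (fdelta (g (s (c z) (v z) + (\<Sum>z\<in>A. s (c z) (v z)))))"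
    by (rule teq_sym[OF lin_add[OF assms(1)]])
  finally have *: "teq R (fsc (c z) (fdelta (g (v z))) + (\<Sum>z\<in>A. fsc (c z) (fdelta (g (v z)))))
      (fdelta (g (s (c z) (v z) + (\<Sum>z\<in>A. s (c z) (v z)))))" .
  have e1: "(\<Sum>z\<in>insert z A. fsc (c z) (fdelta (g (v z)))) = fsc (c z) (fdelta (g (v z))) + (\<Sum>z\<in>A. fsc (c z) (fdelta (g (v z))))"
    using insert(1,2) by (rule sum.insert)
  have e2: "(\<Sum>z\<in>insert z A. s (c z) (v z)) = s (c z) (v z) + (\<Sum>z\<in>A. s (c z) (v z))"
    using insert(1,2) by (rule sum.insert)
  show ?case unfolding e1 e2 by (rule *)
qed

lemma resp_linrels:
  assumes "\<And>a a'. teq R' (\<phi> (g (a + a'))) (\<phi> (g a) + \<phi> (g a'))"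
    and "\<And>k a. teq R' (\<phi> (g (s k a))) (fsc k (\<phi> (g a)))"
    and "r \<in> linrels g s"
  shows "fext (\<phi>::_ \<Rightarrow> _ \<Rightarrow> 'k::field) r \<in> FM.span R'"
  using assms(3) unfolding linrels_def
proof safe
  fix a a'
  have "fext \<phi> (\<lambda>y. fdelta (g (a + a')) y - fdelta (g a) y - fdelta (g a') y)
     = \<phi> (g (a + a')) - (\<phi> (g a) + \<phi> (g a'))"
    unfolding lin3_eq by (simp add: fext_diff fext_add fin_add)
  then show "fext \<phi> (\<lambda>y. fdelta (g (a + a')) y - fdelta (g a) y - fdelta (g a') y) \<in> FM.span R'"
    using assms(1)[of a a'] by (simp add: teq_span)
next
  fix k a
  have "fext \<phi> (\<lambda>y. fdelta (g (s k a)) y - k * fdelta (g a) y)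
     = \<phi> (g (s k a)) - fsc k (\<phi> (g a))"
    unfolding lin2_eq by (simp add: fext_diff fext_fsc fin_fsc)
  then show "fext \<phi> (\<lambda>y. fdelta (g (s k a)) y - k * fdelta (g a) y) \<in> FM.span R'"
    using assms(2)[of k a] by (simp add: teq_span)
qed

lemma resp_rels2:
  fixes \<phi> :: "'a::plus \<times> 'b::plus \<Rightarrow> 'y \<Rightarrow> 'k::field"
  assumes "\<And>a a' b. teq R' (\<phi> (a + a', b)) (\<phi> (a, b) + \<phi> (a', b))"
    and "\<And>k a b. teq R' (\<phi> (sA k a, b)) (fsc k (\<phi> (a, b)))"
    and "\<And>a b b'. teq R' (\<phi> (a, b + b')) (\<phi> (a, b) + \<phi> (a, b'))"
    and "\<And>k a b. teq R' (\<phi> (a, sB k b)) (fsc k (\<phi> (a, b)))"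
  shows "resp (\<phi>::_ \<Rightarrow> _ \<Rightarrow> 'k::field) (rels2 sA sB) R'"
  unfolding resp_def rels2_def
proof safe
  fix r and b :: 'b assume "r \<in> linrels (\<lambda>a. (a, b)) sA"
  then show "fext \<phi> r \<in> FM.span R'" by (rule resp_linrels[rotated 2]) (rule assms)+
next
  fix r and a :: 'a assume "r \<in> linrels (\<lambda>b. (a, b)) sB"
  then show "fext \<phi> r \<in> FM.span R'" by (rule resp_linrels[rotated 2]) (rule assms)+
qed

lemma resp_rels3:
  fixes \<phi> :: "'a::plus \<times> 'b::plus \<times> 'c::plus \<Rightarrow> 'y \<Rightarrow> 'k::field"
  assumes "\<And>a a' b c. teq R' (\<phi> (a + a', b, c)) (\<phi> (a, b, c) + \<phi> (a', b, c))"
    and "\<And>k a b c. teq R' (\<phi> (sA k a, b, c)) (fsc k (\<phi> (a, b, c)))"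
    and "\<And>a b b' c. teq R' (\<phi> (a, b + b', c)) (\<phi> (a, b, c) + \<phi> (a, b', c))"
    and "\<And>k a b c. teq R' (\<phi> (a, sB k b, c)) (fsc k (\<phi> (a, b, c)))"
    and "\<And>a b c c'. teq R' (\<phi> (a, b, c + c')) (\<phi> (a, b, c) + \<phi> (a, b, c'))"
    and "\<And>k a b c. teq R' (\<phi> (a, b, sC k c)) (fsc k (\<phi> (a, b, c)))"
  shows "resp (\<phi>::_ \<Rightarrow> _ \<Rightarrow> 'k::field) (rels3 sA sB sC) R'"
  unfolding resp_def rels3_def
proof safe
  fix r and b :: 'b and c :: 'c assume "r \<in> linrels (\<lambda>a. (a, b, c)) sA"
  then show "fext \<phi> r \<in> FM.span R'" by (rule resp_linrels[rotated 2]) (rule assms)+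
next
  fix r and a :: 'a and c :: 'c assume "r \<in> linrels (\<lambda>b. (a, b, c)) sB"
  then show "fext \<phi> r \<in> FM.span R'" by (rule resp_linrels[rotated 2]) (rule assms)+
next
  fix r and a :: 'a and b :: 'b assume "r \<in> linrels (\<lambda>c. (a, b, c)) sC"
  then show "fext \<phi> r \<in> FM.span R'" by (rule resp_linrels[rotated 2]) (rule assms)+
qed

lemma resp_PBP:
  assumes "resp \<phi> (rels2 sP sP) R'"
    and "\<And>x y b. b \<in> B \<Longrightarrow> teq R' (\<phi> (x * b, y)) (\<phi> (x, b * y))"
  shows "resp (\<phi>::_ \<Rightarrow> _ \<Rightarrow> 'k::field) (relsPBP sP B) R'"
  unfolding resp_def relsPBP_def
proof
  fix r assume "r \<in> rels2 sP sP \<union> balrels2 B"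
  then show "fext \<phi> r \<in> FM.span R'"
  proof
    assume "r \<in> rels2 sP sP" then show ?thesis using assms(1) by (simp add: resp_def)
  next
    assume "r \<in> balrels2 B"
    then obtain x y b where r: "r = (\<lambda>z. fdelta (x * b, y) z - fdelta (x, b * y) z)" "b \<in> B"
      unfolding balrels2_def by blast
    show ?thesis unfolding r(1) bal_eq using assms(2)[OF r(2), of x y] by (simp add: teq_span fext_diff)
  qed
qed

lemma resp_HPBP:
  assumes "resp \<phi> (rels3 sH sP sP) R'"
    and "\<And>h x y b. b \<in> B \<Longrightarrow> teq R' (\<phi> (h, x * b, y)) (\<phi> (h, x, b * y))"
  shows "resp (\<phi>::_ \<Rightarrow> _ \<Rightarrow> 'k::field) (relsHPBP sH sP B) R'"
  unfolding resp_def relsHPBP_def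
proof
  fix r assume "r \<in> rels3 sH sP sP \<union> balrels3 B"
  then show "fext \<phi> r \<in> FM.span R'"
  proof
    assume "r \<in> rels3 sH sP sP" then show ?thesis using assms(1) by (simp add: resp_def)
  next
    assume "r \<in> balrels3 B"
    then obtain h x y b where r: "r = (\<lambda>z. fdelta (h, x * b, y) z - fdelta (h, x, b * y) z)" "b \<in> B"
      unfolding balrels3_def by blast
    show ?thesis unfolding r(1) bal_eq using assms(2)[OF r(2), of h x y] by (simp add: teq_span fext_diff)
  qed
qed

definition dl :: "'h \<Rightarrow> ('z \<Rightarrow> 'k::field) \<Rightarrow> ('h \<times> 'z \<Rightarrow> 'k)" where
  "dl h u = fext (\<lambda>z. fdelta (h, z)) u"

lemma fin_fmap: "fin (f::_ \<Rightarrow> 'k::field) \<Longrightarrow> fin (fmap h f)"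
  by (simp add: fmap_fext fin_fext)

lemma fin_dl: "fin u \<Longrightarrow> fin (dl h u)"
  unfolding dl_def by (rule fin_fext) auto

lemma dl_fdelta[simp]: "dl h (fdelta z :: _ \<Rightarrow> 'k::field) = fdelta (h, z)"
  by (simp add: dl_def)

lemma fext_dl: "fin u \<Longrightarrow> fext \<psi> (dl h u) = fext (\<lambda>z. \<psi> (h, z)) u"
  unfolding dl_def by (subst fext_comp) auto

lemma dl_fext: "fin u \<Longrightarrow> (\<And>x. x \<in> supp u \<Longrightarrow> fin (\<phi> x)) \<Longrightarrow> dl h (fext \<phi> u) = fext (\<lambda>x. dl h (\<phi> x)) u"
  unfolding dl_def by (rule fext_comp)

lemma dl_add: "fin u \<Longrightarrow> fin v \<Longrightarrow> dl h (u + v) = dl h u + dl h v"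
  unfolding dl_def by (rule fext_add)

lemma dl_fsc: "fin u \<Longrightarrow> dl h (fsc k u) = fsc k (dl h u)"
  unfolding dl_def by (rule fext_fsc)

lemma fmap_as_dl: "fin t \<Longrightarrow> fmap (\<lambda>(x, y). (h, x, y)) t = dl h t"
  unfolding dl_def by (simp add: fmap_fext split_beta)

lemma ftens_delta_left: "fin (w::_ \<Rightarrow> 'k::field) \<Longrightarrow> ftens (fdelta a) w = dl a w"
proof -
  assume w: "fin w"
  have "ftens (fdelta a) w = fext fdelta (ftens (fdelta a) w)"
    using w by (simp add: fext_id fin_ftens)
  also have "\<dots> = fext (\<lambda>u. fext (\<lambda>v. fdelta (u, v)) w) (fdelta a)"
    using w by (simp add: fext_ftens)
  finally show ?thesis by (simp add: dl_def)
qed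

lemma fmap_ftens: "fin (a::_ \<Rightarrow> 'k::field) \<Longrightarrow> fin b \<Longrightarrow>
    fmap m (ftens a b) = fext (\<lambda>u. fext (\<lambda>v. fdelta (m (u, v))) b) a"
  by (simp add: fmap_fext fin_ftens fext_ftens)

lemma reassoc_eq: "fin (v::_ \<Rightarrow> 'k::field) \<Longrightarrow>
    fmap (\<lambda>((a1, a2), b'). (a1, a2, b')) (ftens v (fdelta b)) = fext (\<lambda>w. fdelta (fst w, snd w, b)) v"
  by (simp add: fmap_ftens split_beta)

lemma tens_left_eq: "(\<And>a. fin (\<phi> a :: _ \<Rightarrow> 'k::field)) \<Longrightarrow>
   tens_left \<phi> t = fext (\<lambda>w. fext (\<lambda>v. fdelta (fst v, snd v, snd w)) (\<phi> (fst w))) t"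
  unfolding tens_left_def by (rule fext_cong) (simp add: split_beta reassoc_eq)

lemma tens_right_eq: "(\<And>b. fin (\<psi> b :: _ \<Rightarrow> 'k::field)) \<Longrightarrow>
   tens_right \<psi> t = fext (\<lambda>w. dl (fst w) (\<psi> (snd w))) t"
  unfolding tens_right_def by (rule fext_cong) (simp add: split_beta ftens_delta_left)

lemma tmul_eq: "fin (f::_ \<Rightarrow> 'k::field) \<Longrightarrow> fin g \<Longrightarrow>
   tmul f g = fext (\<lambda>u. fext (\<lambda>v. fdelta (fst u * fst v, snd u * snd v)) g) f"
  unfolding tmul_def by (simp add: fmap_ftens split_beta)

lemma lmulPC_eq: "fin (u::_ \<Rightarrow> 'k::field) \<Longrightarrow> lmulPC x u = fext (\<lambda>w. fdelta (x * fst w, snd w)) u"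
  unfolding lmulPC_def by (simp add: fmap_fext split_beta)

lemma fext_double: "fin (a::_ \<Rightarrow> 'k::field) \<Longrightarrow> fin b \<Longrightarrow>
  fext \<psi> (fext (\<lambda>u. fext (\<lambda>v. fdelta (m u v)) b) a) = fext (\<lambda>u. fext (\<lambda>v. \<psi> (m u v)) b) a"
proof -
  assume a: "fin a" "fin b"
  have "fext \<psi> (fext (\<lambda>u. fext (\<lambda>v. fdelta (m u v)) b) a) = fext (\<lambda>u. fext \<psi> (fext (\<lambda>v. fdelta (m u v)) b)) a"
    using a by (intro fext_comp) (auto intro: fin_fext)
  also have "\<dots> = fext (\<lambda>u. fext (\<lambda>v. \<psi> (m u v)) b) a"
    using a by (intro fext_cong) (simp add: fext_comp)
  finally show ?thesis .
qed

locale setting =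
  fixes sC :: "'k::field \<Rightarrow> 'c::ab_group_add \<Rightarrow> 'c"
    and \<Delta>C :: "'c \<Rightarrow> 'c \<times> 'c \<Rightarrow> 'k" and \<epsilon>C :: "'c \<Rightarrow> 'k"
    and sH :: "'k \<Rightarrow> 'h::{ring,monoid_mult} \<Rightarrow> 'h"
    and \<Delta>H :: "'h \<Rightarrow> 'h \<times> 'h \<Rightarrow> 'k" and \<epsilon>H :: "'h \<Rightarrow> 'k"
    and sP :: "'k \<Rightarrow> 'p::{ring,monoid_mult} \<Rightarrow> 'p"
    and \<rho>H :: "'p \<Rightarrow> 'h \<times> 'p \<Rightarrow> 'k" and \<rho>C :: "'p \<Rightarrow> 'p \<times> 'c \<Rightarrow> 'k"
  assumes coalgC: "coalgebra sC \<Delta>C \<epsilon>C"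
    and bialgH: "bialgebra sH \<Delta>H \<epsilon>H"
    and kalgP: "k_algebra sP"
    and bicom: "bicomodule sH \<Delta>H \<epsilon>H sC \<Delta>C \<epsilon>C sP \<rho>H \<rho>C"
    and algmap: "coaction_alg_map sH sP \<rho>H"
    and gal: "galois sC sP \<rho>C"
    and BH: "coinvC sC sP \<rho>C \<subseteq> coinvH sH sP \<rho>H"
begin

abbreviation "BB \<equiv> coinvC sC sP \<rho>C"
abbreviation "R2HP \<equiv> rels2 sH sP"
abbreviation "R2PC \<equiv> rels2 sP sC"
abbreviation "R3 \<equiv> rels3 sH sP sC"
abbreviation "RPBP \<equiv> relsPBP sP BB"
abbreviation "RH \<equiv> relsHPBP sH sP BB"

lemma kH: "sH k (x * y) = sH k x * y" "sH k (x * y) = x * sH k y"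
proof -
  have "\<forall>k x y. sH k (x * y) = sH k x * y \<and> sH k (x * y) = x * sH k y"
    using bialgH unfolding bialgebra_def k_algebra_def by blast
  then show "sH k (x * y) = sH k x * y" "sH k (x * y) = x * sH k y" by blast+
qed
lemma kP: "sP k (x * y) = sP k x * y" "sP k (x * y) = x * sP k y"
proof -
  have "\<forall>k x y. sP k (x * y) = sP k x * y \<and> sP k (x * y) = x * sP k y"
    using kalgP unfolding k_algebra_def by blast
  then show "sP k (x * y) = sP k x * y" "sP k (x * y) = x * sP k y" by blast+
qed

lemma lcom: "left_comodule sH \<Delta>H \<epsilon>H sP \<rho>H"
  using bicom unfolding bicomodule_def by auto
lemma rcom: "right_comodule sC \<Delta>C \<epsilon>C sP \<rho>C"
  using bicom unfolding bicomodule_def by auto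
lemma compat: "teq R3 (tens_right \<rho>C (\<rho>H x)) (tens_left \<rho>H (\<rho>C x))"
  using bicom unfolding bicomodule_def by auto

lemma finH[simp]: "fin (\<rho>H x)"
  using lcom unfolding left_comodule_def lin_mod_def by auto
lemma finC[simp]: "fin (\<rho>C x)"
  using rcom unfolding right_comodule_def lin_mod_def by auto
lemma finD[simp]: "fin (\<Delta>H x)"
  using bialgH unfolding bialgebra_def coalgebra_def lin_mod_def by auto

lemma \<rho>H_add: "teq R2HP (\<rho>H (x + y)) (\<rho>H x + \<rho>H y)"
  using lcom unfolding left_comodule_def lin_mod_def by (auto simp: fadd_eq)
lemma \<rho>H_sc: "teq R2HP (\<rho>H (sP k x)) (fsc k (\<rho>H x))"
  using lcom unfolding left_comodule_def lin_mod_def by (auto simp: fscal_eq)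
lemma \<rho>C_add: "teq R2PC (\<rho>C (x + y)) (\<rho>C x + \<rho>C y)"
  using rcom unfolding right_comodule_def lin_mod_def by (auto simp: fadd_eq)
lemma \<rho>C_sc: "teq R2PC (\<rho>C (sP k x)) (fsc k (\<rho>C x))"
  using rcom unfolding right_comodule_def lin_mod_def by (auto simp: fscal_eq)
lemma coassoc: "teq (rels3 sH sH sP) (tens_left \<Delta>H (\<rho>H x)) (tens_right \<rho>H (\<rho>H x))"
  using lcom unfolding left_comodule_def by auto
lemma counitH: "(\<Sum>z\<in>supp (\<rho>H x). sP (\<rho>H x z * \<epsilon>H (fst z)) (snd z)) = x"
  using lcom unfolding left_comodule_def by auto
lemma alg: "teq R2HP (\<rho>H (x * y)) (tmul (\<rho>H x) (\<rho>H y))"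
  using algmap unfolding coaction_alg_map_def by auto
lemma unit: "teq R2HP (\<rho>H 1) (fdelta (1, 1))"
  using algmap unfolding coaction_alg_map_def by auto
lemma coinvB: "b \<in> BB \<Longrightarrow> teq R2HP (\<rho>H b) (fdelta (1, b))"
  using BH unfolding coinvH_def by auto

lemma gal_inj: "fin t \<Longrightarrow> fin t' \<Longrightarrow> teq R2PC (can \<rho>C t) (can \<rho>C t') \<Longrightarrow> teq RPBP t t'"
  using gal unfolding galois_def by auto
lemma gal_surj: "fin u \<Longrightarrow> \<exists>t. fin t \<and> teq R2PC (can \<rho>C t) u"
  using gal unfolding galois_def by auto

definition canG :: "'p \<times> 'p \<Rightarrow> 'p \<times> 'c \<Rightarrow> 'k" where
  "canG z = lmulPC (fst z) (\<rho>C (snd z))"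

lemma fin_canG[simp]: "fin (canG z)"
  unfolding canG_def lmulPC_def by (simp add: fin_fmap)

lemma can_eq: "can \<rho>C t = fext canG t"
  unfolding can_def canG_def by (simp add: case_prod_unfold)

lemma can_fdelta: "can \<rho>C (fdelta z) = canG z"
  by (simp add: can_eq)

lemma fin_can: "fin t \<Longrightarrow> fin (can \<rho>C t)"
  unfolding can_eq by (rule fin_fext) auto

definition Inv :: "'p \<times> 'c \<Rightarrow> 'p \<times> 'p \<Rightarrow> 'k" where
  "Inv z = (SOME t. fin t \<and> teq R2PC (can \<rho>C t) (fdelta z))"

lemma Inv: "fin (Inv z)" "teq R2PC (can \<rho>C (Inv z)) (fdelta z)"
proof -
  have "\<exists>t. fin t \<and> teq R2PC (can \<rho>C t) (fdelta z)" by (rule gal_surj) simp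
  then have "fin (Inv z) \<and> teq R2PC (can \<rho>C (Inv z)) (fdelta z)"
    unfolding Inv_def by (rule someI_ex)
  then show "fin (Inv z)" "teq R2PC (can \<rho>C (Inv z)) (fdelta z)" by auto
qed

lemma fin_Inv[simp]: "fin (Inv z)" by (rule Inv(1))

lemma Inv_eq: "fin t \<Longrightarrow> teq R2PC (fdelta z) (can \<rho>C t) \<Longrightarrow> teq RPBP (Inv z) t"
  by (rule gal_inj) (auto intro: teq_trans Inv)

lemma can_Inv_fext: "fin u \<Longrightarrow> teq R2PC (can \<rho>C (fext Inv u)) u"
proof -
  assume u: "fin u"
  have e: "can \<rho>C (fext Inv u) = fext (\<lambda>z. can \<rho>C (Inv z)) u"
    unfolding can_eq using u by (intro fext_comp) auto
  have "teq R2PC (fext (\<lambda>z. can \<rho>C (Inv z)) u) (fext fdelta u)"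
    by (rule fext_cong_teq) (rule Inv(2))
  then show ?thesis using e fext_id[OF u] by simp
qed

lemma can_add: "fin t \<Longrightarrow> fin t' \<Longrightarrow> can \<rho>C (t + t') = can \<rho>C t + can \<rho>C t'"
  unfolding can_eq by (rule fext_add)
lemma can_fsc: "fin t \<Longrightarrow> can \<rho>C (fsc k t) = fsc k (can \<rho>C t)"
  unfolding can_eq by (rule fext_fsc)

lemma resp_dl_PBP: "resp (\<lambda>z. fdelta (h, z)) RPBP RH"
proof (rule resp_PBP)
  show "resp (\<lambda>z. fdelta (h, z)) (rels2 sP sP) RH"
  proof (rule resp_rels2)
    fix a a' b
    show "teq RH (fdelta (h, a + a', b)) (fdelta (h, a, b) + fdelta (h, a', b))"
      by (rule lin_add[where g="\<lambda>a. (h, a, b)"]) (rule order_trans[OF lr3_2 rels3_HPBP])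
  next
    fix k a b
    show "teq RH (fdelta (h, sP k a, b)) (fsc k (fdelta (h, a, b)))"
      by (rule lin_scale[where g="\<lambda>a. (h, a, b)"]) (rule order_trans[OF lr3_2 rels3_HPBP])
  next
    fix a b b'
    show "teq RH (fdelta (h, a, b + b')) (fdelta (h, a, b) + fdelta (h, a, b'))"
      by (rule lin_add[where g="\<lambda>b. (h, a, b)"]) (rule order_trans[OF lr3_3 rels3_HPBP])
  next
    fix k a b
    show "teq RH (fdelta (h, a, sP k b)) (fsc k (fdelta (h, a, b)))"
      by (rule lin_scale[where g="\<lambda>b. (h, a, b)"]) (rule order_trans[OF lr3_3 rels3_HPBP])
  qed
next
  fix x y b assume "b \<in> BB"
  then show "teq RH (fdelta (h, x * b, y)) (fdelta (h, x, b * y))"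
    unfolding relsHPBP_def balrels3_def by (intro teq_base) (auto simp: bal_eq[symmetric])
qed

lemma resp_dl_PC: "resp (\<lambda>z. fdelta (h, z)) R2PC R3"
proof (rule resp_rels2)
  fix a a' b
  show "teq R3 (fdelta (h, a + a', b)) (fdelta (h, a, b) + fdelta (h, a', b))"
    by (rule lin_add[where g="\<lambda>a. (h, a, b)"]) (rule lr3_2)
next
  fix k a b
  show "teq R3 (fdelta (h, sP k a, b)) (fsc k (fdelta (h, a, b)))"
    by (rule lin_scale[where g="\<lambda>a. (h, a, b)"]) (rule lr3_2)
next
  fix a b b'
  show "teq R3 (fdelta (h, a, b + b')) (fdelta (h, a, b) + fdelta (h, a, b'))"
    by (rule lin_add[where g="\<lambda>b. (h, a, b)"]) (rule lr3_3)
next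
  fix k a b
  show "teq R3 (fdelta (h, a, sC k b)) (fsc k (fdelta (h, a, b)))"
    by (rule lin_scale[where g="\<lambda>b. (h, a, b)"]) (rule lr3_3)
qed

lemma dl_teq_PBP: "fin u \<Longrightarrow> fin v \<Longrightarrow> teq RPBP u v \<Longrightarrow> teq RH (dl h u) (dl h v)"
  unfolding dl_def by (rule fext_resp[OF finrels_relsPBP resp_dl_PBP])

lemma dl_teq_PC: "fin u \<Longrightarrow> fin v \<Longrightarrow> teq R2PC u v \<Longrightarrow> teq R3 (dl h u) (dl h v)"
  unfolding dl_def by (rule fext_resp[OF finrels_rels2 resp_dl_PC])

definition Gm :: "'h \<times> 'p \<times> 'p \<Rightarrow> 'h \<times> 'p \<times> 'c \<Rightarrow> 'k" where
  "Gm x = dl (fst x) (canG (snd x))"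
definition Im :: "'h \<times> 'p \<times> 'c \<Rightarrow> 'h \<times> 'p \<times> 'p \<Rightarrow> 'k" where
  "Im x = dl (fst x) (Inv (snd x))"

lemma fin_Gm[simp]: "fin (Gm x)" unfolding Gm_def by (simp add: fin_dl)
lemma fin_Im[simp]: "fin (Im x)" unfolding Im_def by (simp add: fin_dl)

lemma IG: "teq RH (fext Im (Gm x)) (fdelta x)"
proof -
  obtain h z where x: "x = (h, z)" by (cases x)
  have "fext Im (Gm x) = fext (\<lambda>w. Im (h, w)) (canG z)" by (simp add: x Gm_def fext_dl)
  also have "\<dots> = fext (\<lambda>w. dl h (Inv w)) (canG z)" by (simp add: Im_def)
  also have "\<dots> = dl h (fext Inv (canG z))" by (rule dl_fext[symmetric]) auto
  finally have e: "fext Im (Gm x) = dl h (fext Inv (canG z))" .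
  have f: "fin (fext Inv (canG z))" by (rule fin_fext) auto
  have "teq R2PC (can \<rho>C (fext Inv (canG z))) (can \<rho>C (fdelta z))"
    using can_Inv_fext[of "canG z"] by (simp add: can_fdelta)
  then have "teq RPBP (fext Inv (canG z)) (fdelta z)"
    using f by (intro gal_inj) auto
  then have "teq RH (dl h (fext Inv (canG z))) (dl h (fdelta z))"
    using f by (intro dl_teq_PBP) auto
  then show ?thesis unfolding e by (simp add: x)
qed

lemma IG_all: "fin T \<Longrightarrow> teq RH (fext Im (fext Gm T)) T"
proof -
  assume T: "fin T"
  have e: "fext Im (fext Gm T) = fext (\<lambda>x. fext Im (Gm x)) T" using T by (intro fext_comp) auto
  have "teq RH (fext (\<lambda>x. fext Im (Gm x)) T) (fext fdelta T)" by (rule fext_cong_teq) (rule IG)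
  then show ?thesis using e fext_id[OF T] by simp
qed

lemma lr3_1H: "linrels (\<lambda>a. (a, b, c)) sH \<subseteq> RH" by (rule order_trans[OF lr3_1 rels3_HPBP])

lemma resp_Im: "resp Im R3 RH"
proof (rule resp_rels3)
  fix a a' b c
  have "teq RH (fext (\<lambda>z. fdelta (a + a', z)) (Inv (b, c)))
          (fext (\<lambda>z. fdelta (a, z) + fdelta (a', z)) (Inv (b, c)))"
  proof (rule fext_cong_teq)
    fix z :: "'p \<times> 'p"
    have "teq RH (fdelta (a + a', fst z, snd z)) (fdelta (a, fst z, snd z) + fdelta (a', fst z, snd z))"
      by (rule lin_add[where g="\<lambda>a. (a, fst z, snd z)"]) (rule lr3_1H)
    then show "teq RH (fdelta (a + a', z)) (fdelta (a, z) + fdelta (a', z))" by simp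
  qed
  then show "teq RH (Im (a + a', b, c)) (Im (a, b, c) + Im (a', b, c))"
    by (simp add: Im_def dl_def fext_plus_fun)
next
  fix k a b c
  have "teq RH (fext (\<lambda>z. fdelta (sH k a, z)) (Inv (b, c)))
          (fext (\<lambda>z. fsc k (fdelta (a, z))) (Inv (b, c)))"
  proof (rule fext_cong_teq)
    fix z :: "'p \<times> 'p"
    have "teq RH (fdelta (sH k a, fst z, snd z)) (fsc k (fdelta (a, fst z, snd z)))"
      by (rule lin_scale[where g="\<lambda>a. (a, fst z, snd z)"]) (rule lr3_1H)
    then show "teq RH (fdelta (sH k a, z)) (fsc k (fdelta (a, z)))" by simp
  qed
  then show "teq RH (Im (sH k a, b, c)) (fsc k (Im (a, b, c)))"
    by (simp add: Im_def dl_def fext_fsc_fun)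
next
  fix a b b' c
  have "teq R2PC (fdelta (b + b', c)) (can \<rho>C (Inv (b, c) + Inv (b', c)))"
  proof -
    have "teq R2PC (fdelta (b + b', c)) (fdelta (b, c) + fdelta (b', c))"
      by (rule lin_add[where g="\<lambda>b. (b, c)"]) (rule lr2_1)
    also have "teq R2PC \<dots> (can \<rho>C (Inv (b, c)) + can \<rho>C (Inv (b', c)))"
      by (intro teq_add teq_sym[OF Inv(2)])
    finally show ?thesis by (simp add: can_add)
  qed
  then have "teq RPBP (Inv (b + b', c)) (Inv (b, c) + Inv (b', c))"
    by (intro Inv_eq fin_add) auto
  then have "teq RH (dl a (Inv (b + b', c))) (dl a (Inv (b, c) + Inv (b', c)))"
    by (intro dl_teq_PBP fin_add) auto
  then show "teq RH (Im (a, b + b', c)) (Im (a, b, c) + Im (a, b', c))"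
    by (simp add: Im_def dl_add)
next
  fix k a b c
  have "teq R2PC (fdelta (sP k b, c)) (can \<rho>C (fsc k (Inv (b, c))))"
  proof -
    have "teq R2PC (fdelta (sP k b, c)) (fsc k (fdelta (b, c)))"
      by (rule lin_scale[where g="\<lambda>b. (b, c)"]) (rule lr2_1)
    also have "teq R2PC \<dots> (fsc k (can \<rho>C (Inv (b, c))))"
      by (intro teq_fsc teq_sym[OF Inv(2)])
    finally show ?thesis by (simp add: can_fsc)
  qed
  then have "teq RPBP (Inv (sP k b, c)) (fsc k (Inv (b, c)))"
    by (intro Inv_eq fin_fsc) auto
  then have "teq RH (dl a (Inv (sP k b, c))) (dl a (fsc k (Inv (b, c))))"
    by (intro dl_teq_PBP fin_fsc) auto
  then show "teq RH (Im (a, sP k b, c)) (fsc k (Im (a, b, c)))"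
    by (simp add: Im_def dl_fsc)
next
  fix a b c c'
  have "teq R2PC (fdelta (b, c + c')) (can \<rho>C (Inv (b, c) + Inv (b, c')))"
  proof -
    have "teq R2PC (fdelta (b, c + c')) (fdelta (b, c) + fdelta (b, c'))"
      by (rule lin_add[where g="\<lambda>c. (b, c)"]) (rule lr2_2)
    also have "teq R2PC \<dots> (can \<rho>C (Inv (b, c)) + can \<rho>C (Inv (b, c')))"
      by (intro teq_add teq_sym[OF Inv(2)])
    finally show ?thesis by (simp add: can_add)
  qed
  then have "teq RPBP (Inv (b, c + c')) (Inv (b, c) + Inv (b, c'))"
    by (intro Inv_eq fin_add) auto
  then have "teq RH (dl a (Inv (b, c + c'))) (dl a (Inv (b, c) + Inv (b, c')))"
    by (intro dl_teq_PBP fin_add) auto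
  then show "teq RH (Im (a, b, c + c')) (Im (a, b, c) + Im (a, b, c'))"
    by (simp add: Im_def dl_add)
next
  fix k a b c
  have "teq R2PC (fdelta (b, sC k c)) (can \<rho>C (fsc k (Inv (b, c))))"
  proof -
    have "teq R2PC (fdelta (b, sC k c)) (fsc k (fdelta (b, c)))"
      by (rule lin_scale[where g="\<lambda>c. (b, c)"]) (rule lr2_2)
    also have "teq R2PC \<dots> (fsc k (can \<rho>C (Inv (b, c))))"
      by (intro teq_fsc teq_sym[OF Inv(2)])
    finally show ?thesis by (simp add: can_fsc)
  qed
  then have "teq RPBP (Inv (b, sC k c)) (fsc k (Inv (b, c)))"
    by (intro Inv_eq fin_fsc) auto
  then have "teq RH (dl a (Inv (b, sC k c))) (dl a (fsc k (Inv (b, c))))"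
    by (intro dl_teq_PBP fin_fsc) auto
  then show "teq RH (Im (a, b, sC k c)) (fsc k (Im (a, b, c)))"
    by (simp add: Im_def dl_fsc)
qed

end

context setting
begin

definition Ec :: "'c \<Rightarrow> ('h \<times> 'p \<Rightarrow> 'k) \<Rightarrow> 'h \<times> 'p \<times> 'c \<Rightarrow> 'k" where
  "Ec c v = fext (\<lambda>v'. fdelta (fst v', snd v', c)) v"

definition TLm :: "'p \<times> 'c \<Rightarrow> 'h \<times> 'p \<times> 'c \<Rightarrow> 'k" where
  "TLm w = Ec (snd w) (\<rho>H (fst w))"

definition Mu :: "'h \<times> 'p \<Rightarrow> 'h \<times> 'p \<times> 'c \<Rightarrow> 'h \<times> 'p \<times> 'c" where
  "Mu u w = (fst u * fst w, snd u * fst (snd w), snd (snd w))"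

definition \<Phi>m :: "'p \<times> 'p \<Rightarrow> 'h \<times> 'p \<times> 'p \<Rightarrow> 'k" where
  "\<Phi>m z = fmap (\<lambda>((h1, p1), (h2, q1)). (h1 * h2, p1, q1)) (ftens (\<rho>H (fst z)) (\<rho>H (snd z)))"

lemma fin_Ec[simp]: "fin v \<Longrightarrow> fin (Ec c v)" unfolding Ec_def by (rule fin_fext) auto
lemma fin_TLm[simp]: "fin (TLm w)" unfolding TLm_def by simp
lemma fin_\<Phi>m[simp]: "fin (\<Phi>m z)" unfolding \<Phi>m_def by (intro fin_fmap fin_ftens finH)

lemma tl_eq: "tens_left \<rho>H t = fext TLm t"
  unfolding TLm_def Ec_def by (rule tens_left_eq) simp

lemma tr_eq: "tens_right \<rho>C v = fext (\<lambda>w. dl (fst w) (\<rho>C (snd w))) v"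
  by (rule tens_right_eq) simp

lemma resp_E: "resp (\<lambda>v. fdelta (fst v, snd v, c)) R2HP R3"
proof (rule resp_rels2, goal_cases)
  case (1 a a' b) show ?case using lin_add[where g="\<lambda>a. (a, b, c)", OF lr3_1] by simp
next
  case (2 k a b) show ?case using lin_scale[where g="\<lambda>a. (a, b, c)", OF lr3_1] by simp
next
  case (3 a b b') show ?case using lin_add[where g="\<lambda>b. (a, b, c)", OF lr3_2] by simp
next
  case (4 k a b) show ?case using lin_scale[where g="\<lambda>b. (a, b, c)", OF lr3_2] by simp
qed

lemma Ec_teq: "fin u \<Longrightarrow> fin v \<Longrightarrow> teq R2HP u v \<Longrightarrow> teq R3 (Ec c u) (Ec c v)"
  unfolding Ec_def by (rule fext_resp[OF finrels_rels2 resp_E])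

lemma Ec_add: "fin u \<Longrightarrow> fin v \<Longrightarrow> Ec c (u + v) = Ec c u + Ec c v"
  unfolding Ec_def by (rule fext_add)
lemma Ec_fsc: "fin u \<Longrightarrow> Ec c (fsc k u) = fsc k (Ec c u)"
  unfolding Ec_def by (rule fext_fsc)

lemma resp_TLm: "resp TLm R2PC R3"
proof (rule resp_rels2)
  fix a a' b
  have "teq R3 (Ec b (\<rho>H (a + a'))) (Ec b (\<rho>H a + \<rho>H a'))"
    by (intro Ec_teq fin_add \<rho>H_add finH)
  then show "teq R3 (TLm (a + a', b)) (TLm (a, b) + TLm (a', b))"
    by (simp add: TLm_def Ec_add)
next
  fix k a b
  have "teq R3 (Ec b (\<rho>H (sP k a))) (Ec b (fsc k (\<rho>H a)))"
    by (intro Ec_teq fin_fsc \<rho>H_sc finH)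
  then show "teq R3 (TLm (sP k a, b)) (fsc k (TLm (a, b)))"
    by (simp add: TLm_def Ec_fsc)
next
  fix a b b'
  have "teq R3 (fext (\<lambda>v'. fdelta (fst v', snd v', b + b')) (\<rho>H a))
     (fext (\<lambda>v'. fdelta (fst v', snd v', b) + fdelta (fst v', snd v', b')) (\<rho>H a))"
    by (rule fext_cong_teq) (rule lin_add[where g="\<lambda>c. (_, _, c)", OF lr3_3])
  then show "teq R3 (TLm (a, b + b')) (TLm (a, b) + TLm (a, b'))"
    by (simp add: TLm_def Ec_def fext_plus_fun)
next
  fix k a b
  have "teq R3 (fext (\<lambda>v'. fdelta (fst v', snd v', sC k b)) (\<rho>H a))
     (fext (\<lambda>v'. fsc k (fdelta (fst v', snd v', b))) (\<rho>H a))"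
    by (rule fext_cong_teq) (rule lin_scale[where g="\<lambda>c. (_, _, c)", OF lr3_3])
  then show "teq R3 (TLm (a, sC k b)) (fsc k (TLm (a, b)))"
    by (simp add: TLm_def Ec_def fext_fsc_fun)
qed

lemma resp_M: "resp (\<lambda>w. fdelta (Mu u w)) R3 R3"
proof (rule resp_rels3, goal_cases)
  case (1 a a' b c)
  show ?case using lin_add[where g="\<lambda>a. (a, snd u * b, c)" and a="fst u * a" and a'="fst u * a'", OF lr3_1]
    by (simp add: Mu_def distrib_left)
next
  case (2 k a b c)
  show ?case using lin_scale[where g="\<lambda>a. (a, snd u * b, c)" and a="fst u * a" and k=k and s=sH, OF lr3_1]
    by (simp add: Mu_def kH(2))
next
  case (3 a b b' c)
  show ?case using lin_add[where g="\<lambda>b. (fst u * a, b, c)" and a="snd u * b" and a'="snd u * b'", OF lr3_2]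
    by (simp add: Mu_def distrib_left)
next
  case (4 k a b c)
  show ?case using lin_scale[where g="\<lambda>b. (fst u * a, b, c)" and a="snd u * b" and k=k and s=sP, OF lr3_2]
    by (simp add: Mu_def kP(2))
next
  case (5 a b c c')
  show ?case using lin_add[where g="\<lambda>c. (fst u * a, snd u * b, c)" and a=c and a'=c', OF lr3_3]
    by (simp add: Mu_def)
next
  case (6 k a b c)
  show ?case using lin_scale[where g="\<lambda>c. (fst u * a, snd u * b, c)" and a=c and k=k, OF lr3_3]
    by (simp add: Mu_def)
qed

lemma \<Phi>m_eq: "\<Phi>m z = fext (\<lambda>u. fext (\<lambda>v. fdelta (fst u * fst v, snd u, snd v)) (\<rho>H (snd z))) (\<rho>H (fst z))"
  unfolding \<Phi>m_def by (simp add: fmap_ftens split_beta)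

lemma Gm_eq: "Gm (h, p, q) = fext (\<lambda>w. fdelta (h, p * fst w, snd w)) (\<rho>C q)"
proof -
  have "Gm (h, p, q) = dl h (fext (\<lambda>w. fdelta (p * fst w, snd w)) (\<rho>C q))"
    by (simp add: Gm_def canG_def lmulPC_eq)
  also have "\<dots> = fext (\<lambda>w. dl h (fdelta (p * fst w, snd w))) (\<rho>C q)"
    by (rule dl_fext) auto
  finally show ?thesis by simp
qed

lemma fin_tmul: "fin (f :: 'h \<times> 'p \<Rightarrow> 'k) \<Longrightarrow> fin g \<Longrightarrow> fin (tmul f g)"
  unfolding tmul_def by (intro fin_fmap fin_ftens)

lemma G\<Phi>: "teq R3 (fext Gm (\<Phi>m z)) (tens_left \<rho>H (canG z))"
proof -
  obtain x y where z: "z = (x, y)" by (cases z)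
  have a: "fext Gm (\<Phi>m z) = fext (\<lambda>u. fext (\<lambda>v. Gm (fst u * fst v, snd u, snd v)) (\<rho>H y)) (\<rho>H x)"
    unfolding \<Phi>m_eq z fst_conv snd_conv by (rule fext_double) simp_all
  have b: "fext (\<lambda>v. Gm (fst u * fst v, snd u, snd v)) (\<rho>H y)
      = fext (\<lambda>w. fdelta (Mu u w)) (tens_right \<rho>C (\<rho>H y))" for u
  proof -
    have "fext (\<lambda>w. fdelta (Mu u w)) (tens_right \<rho>C (\<rho>H y))
        = fext (\<lambda>v. fext (\<lambda>w. fdelta (Mu u w)) (dl (fst v) (\<rho>C (snd v)))) (\<rho>H y)"
      unfolding tr_eq by (rule fext_comp) (auto intro: fin_dl)
    also have "\<dots> = fext (\<lambda>v. fext (\<lambda>w. fdelta (Mu u (fst v, w))) (\<rho>C (snd v))) (\<rho>H y)"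
      by (rule fext_cong) (simp add: fext_dl)
    also have "\<dots> = fext (\<lambda>v. Gm (fst u * fst v, snd u, snd v)) (\<rho>H y)"
      by (rule fext_cong) (simp add: Gm_eq Mu_def)
    finally show ?thesis by simp
  qed
  have finTR: "fin (tens_right \<rho>C (\<rho>H y))" unfolding tr_eq by (rule fin_fext) (auto intro: fin_dl)
  have finTL: "fin (tens_left \<rho>H (\<rho>C y))" unfolding tl_eq by (rule fin_fext) auto
  have c: "teq R3 (fext (\<lambda>w. fdelta (Mu u w)) (tens_right \<rho>C (\<rho>H y)))
                  (fext (\<lambda>w. fdelta (Mu u w)) (tens_left \<rho>H (\<rho>C y)))" for u
    by (rule fext_resp[OF finrels_rels3 resp_M finTR finTL compat])
  have d: "fext (\<lambda>w. fdelta (Mu u w)) (tens_left \<rho>H (\<rho>C y))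
     = fext (\<lambda>w. fext (\<lambda>v. fdelta (fst u * fst v, snd u * snd v, snd w)) (\<rho>H (fst w))) (\<rho>C y)" for u
  proof -
    have "fext (\<lambda>w. fdelta (Mu u w)) (tens_left \<rho>H (\<rho>C y))
        = fext (\<lambda>w. fext (\<lambda>w. fdelta (Mu u w)) (TLm w)) (\<rho>C y)"
      unfolding tl_eq by (rule fext_comp) auto
    also have "\<dots> = fext (\<lambda>w. fext (\<lambda>v. fdelta (fst u * fst v, snd u * snd v, snd w)) (\<rho>H (fst w))) (\<rho>C y)"
      by (rule fext_cong) (simp add: TLm_def Ec_def fext_comp Mu_def)
    finally show ?thesis .
  qed
  have e: "teq R3 (fext Gm (\<Phi>m z))
     (fext (\<lambda>u. fext (\<lambda>w. fext (\<lambda>v. fdelta (fst u * fst v, snd u * snd v, snd w)) (\<rho>H (fst w))) (\<rho>C y)) (\<rho>H x))"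
    unfolding a by (rule fext_cong_teq) (simp only: b c d[symmetric])
  have f: "fext (\<lambda>u. fext (\<lambda>w. fext (\<lambda>v. fdelta (fst u * fst v, snd u * snd v, snd w)) (\<rho>H (fst w))) (\<rho>C y)) (\<rho>H x)
     = fext (\<lambda>w. Ec (snd w) (tmul (\<rho>H x) (\<rho>H (fst w)))) (\<rho>C y)"
  proof -
    have "fext (\<lambda>u. fext (\<lambda>w. fext (\<lambda>v. fdelta (fst u * fst v, snd u * snd v, snd w)) (\<rho>H (fst w))) (\<rho>C y)) (\<rho>H x)
      = fext (\<lambda>w. fext (\<lambda>u. fext (\<lambda>v. fdelta (fst u * fst v, snd u * snd v, snd w)) (\<rho>H (fst w))) (\<rho>H x)) (\<rho>C y)"
      by (rule fext_swap)
    also have "\<dots> = fext (\<lambda>w. Ec (snd w) (tmul (\<rho>H x) (\<rho>H (fst w)))) (\<rho>C y)"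
    proof (rule fext_cong)
      fix w
      show "fext (\<lambda>u. fext (\<lambda>v. fdelta (fst u * fst v, snd u * snd v, snd w)) (\<rho>H (fst w))) (\<rho>H x)
          = Ec (snd w) (tmul (\<rho>H x) (\<rho>H (fst w)))"
        unfolding Ec_def tmul_eq[OF finH finH] by (subst fext_double) simp_all
    qed
    finally show ?thesis .
  qed
  have g: "teq R3 (fext (\<lambda>w. Ec (snd w) (tmul (\<rho>H x) (\<rho>H (fst w)))) (\<rho>C y))
                  (fext (\<lambda>w. TLm (x * fst w, snd w)) (\<rho>C y))"
  proof (rule fext_cong_teq)
    fix w
    show "teq R3 (Ec (snd w) (tmul (\<rho>H x) (\<rho>H (fst w)))) (TLm (x * fst w, snd w))"
      unfolding TLm_def by (simp add: Ec_teq fin_tmul teq_sym[OF alg])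
  qed
  have h: "fext (\<lambda>w. TLm (x * fst w, snd w)) (\<rho>C y) = tens_left \<rho>H (canG z)"
  proof -
    have "tens_left \<rho>H (canG z) = fext TLm (fext (\<lambda>w. fdelta (x * fst w, snd w)) (\<rho>C y))"
      by (simp add: tl_eq z canG_def lmulPC_eq)
    also have "\<dots> = fext (\<lambda>w. TLm (x * fst w, snd w)) (\<rho>C y)"
      by (subst fext_comp) auto
    finally show ?thesis by simp
  qed
  show ?thesis using e g unfolding f h by (rule teq_trans)
qed

lemma part1:
  assumes t: "fin t" and ct: "teq R2PC (can \<rho>C t) (fdelta (1, c))"
  shows "teq RH (fext \<Phi>m t) (dl 1 t)"
proof -
  let ?L = "fext \<Phi>m t" and ?R = "dl 1 t"
  have finL: "fin ?L" using t by (intro fin_fext) auto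
  have finR: "fin ?R" using t by (rule fin_dl)
  have A1: "fext Gm ?L = fext (\<lambda>z. fext Gm (\<Phi>m z)) t" using t by (intro fext_comp) auto
  have A2: "teq R3 (fext (\<lambda>z. fext Gm (\<Phi>m z)) t) (fext (\<lambda>z. tens_left \<rho>H (canG z)) t)"
    by (rule fext_cong_teq) (rule G\<Phi>)
  have A3: "fext (\<lambda>z. tens_left \<rho>H (canG z)) t = fext TLm (can \<rho>C t)"
    unfolding tl_eq can_eq using t by (subst fext_comp) auto
  have A4: "teq R3 (fext TLm (can \<rho>C t)) (fext TLm (fdelta (1, c)))"
    using t ct by (intro fext_resp[OF finrels_rels2 resp_TLm] fin_can) auto
  have A5: "teq R3 (fext TLm (fdelta (1, c))) (fdelta (1, 1, c))"
  proof -
    have "teq R3 (Ec c (\<rho>H 1)) (Ec c (fdelta (1, 1)))" by (intro Ec_teq unit) auto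
    then show ?thesis by (simp add: TLm_def Ec_def)
  qed
  have A: "teq R3 (fext Gm ?L) (fdelta (1, 1, c))"
    unfolding A1 using teq_trans[OF A2[unfolded A3] teq_trans[OF A4 A5]] .
  have B1: "fext Gm ?R = dl 1 (can \<rho>C t)"
  proof -
    have "fext Gm ?R = fext (\<lambda>z. dl 1 (canG z)) t" using t by (simp add: fext_dl Gm_def)
    also have "\<dots> = dl 1 (can \<rho>C t)" unfolding can_eq by (rule dl_fext[symmetric]) (auto simp: t)
    finally show ?thesis .
  qed
  have B2: "teq R3 (dl 1 (can \<rho>C t)) (fdelta (1, 1, c))"
    using dl_teq_PC[OF fin_can[OF t] _ ct, of 1] by simp
  have C: "teq R3 (fext Gm ?L) (fext Gm ?R)"
    unfolding B1 by (rule teq_trans[OF A teq_sym[OF B2]])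
  have D: "teq RH (fext Im (fext Gm ?L)) (fext Im (fext Gm ?R))"
    using finL finR C t by (intro fext_resp[OF finrels_rels3 resp_Im] fin_fext) auto
  show ?thesis
    by (rule teq_trans[OF teq_sym[OF IG_all[OF finL]] teq_trans[OF D IG_all[OF finR]]])
qed

end

context setting
begin

lemma lr3_2H: "linrels (\<lambda>b. (a, b, c)) sP \<subseteq> RH" by (rule order_trans[OF lr3_2 rels3_HPBP])
lemma lr3_3H: "linrels (\<lambda>c. (a, b, c)) sP \<subseteq> RH" by (rule order_trans[OF lr3_3 rels3_HPBP])

lemma fsc_fsc: "fsc a (fsc b f) = fsc (a * b) f"
  by (simp add: fun_eq_iff fsc_apply mult.assoc)

lemma resp_tmul1: "resp (\<lambda>u'. fext (\<lambda>v. fdelta (fst u' * fst v, snd u' * snd v)) w) R2HP R2HP"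
proof (rule resp_rels2)
  fix a a' b
  have "teq R2HP (fext (\<lambda>v. fdelta ((a + a') * fst v, b * snd v)) w)
     (fext (\<lambda>v. fdelta (a * fst v, b * snd v) + fdelta (a' * fst v, b * snd v)) w)"
    by (rule fext_cong_teq) (simp add: distrib_right lin_add[where g="\<lambda>a. (a, _)", OF lr2_1])
  then show "teq R2HP (fext (\<lambda>v. fdelta (fst (a + a', b) * fst v, snd (a + a', b) * snd v)) w)
     (fext (\<lambda>v. fdelta (fst (a, b) * fst v, snd (a, b) * snd v)) w +
      fext (\<lambda>v. fdelta (fst (a', b) * fst v, snd (a', b) * snd v)) w)"
    by (simp add: fext_plus_fun)
next
  fix k a b
  have "teq R2HP (fext (\<lambda>v. fdelta (sH k a * fst v, b * snd v)) w)
     (fext (\<lambda>v. fsc k (fdelta (a * fst v, b * snd v))) w)"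
    by (rule fext_cong_teq) (simp add: kH(1)[symmetric] lin_scale[where g="\<lambda>a. (a, _)", OF lr2_1])
  then show "teq R2HP (fext (\<lambda>v. fdelta (fst (sH k a, b) * fst v, snd (sH k a, b) * snd v)) w)
     (fsc k (fext (\<lambda>v. fdelta (fst (a, b) * fst v, snd (a, b) * snd v)) w))"
    by (simp add: fext_fsc_fun)
next
  fix a b b'
  have "teq R2HP (fext (\<lambda>v. fdelta (a * fst v, (b + b') * snd v)) w)
     (fext (\<lambda>v. fdelta (a * fst v, b * snd v) + fdelta (a * fst v, b' * snd v)) w)"
    by (rule fext_cong_teq) (simp add: distrib_right lin_add[where g="\<lambda>b. (_, b)", OF lr2_2])
  then show "teq R2HP (fext (\<lambda>v. fdelta (fst (a, b + b') * fst v, snd (a, b + b') * snd v)) w)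
     (fext (\<lambda>v. fdelta (fst (a, b) * fst v, snd (a, b) * snd v)) w +
      fext (\<lambda>v. fdelta (fst (a, b') * fst v, snd (a, b') * snd v)) w)"
    by (simp add: fext_plus_fun)
next
  fix k a b
  have "teq R2HP (fext (\<lambda>v. fdelta (a * fst v, sP k b * snd v)) w)
     (fext (\<lambda>v. fsc k (fdelta (a * fst v, b * snd v))) w)"
    by (rule fext_cong_teq) (simp add: kP(1)[symmetric] lin_scale[where g="\<lambda>b. (_, b)", OF lr2_2])
  then show "teq R2HP (fext (\<lambda>v. fdelta (fst (a, sP k b) * fst v, snd (a, sP k b) * snd v)) w)
     (fsc k (fext (\<lambda>v. fdelta (fst (a, b) * fst v, snd (a, b) * snd v)) w))"
    by (simp add: fext_fsc_fun)
qed

lemma tmul_teq1: "fin u \<Longrightarrow> fin u' \<Longrightarrow> fin w \<Longrightarrow> teq R2HP u u' \<Longrightarrow> teq R2HP (tmul u w) (tmul u' w)"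
  by (simp add: tmul_eq fext_resp[OF finrels_rels2 resp_tmul1])

lemma bal_in: "b \<in> BB \<Longrightarrow> teq RH (fdelta (h, x * b, q)) (fdelta (h, x, b * q))"
proof (rule teq_base)
  assume b: "b \<in> BB"
  have "\<exists>h' x' y' b'. fdelta (h, x * b, q) - fdelta (h, x, b * q)
      = (\<lambda>z. fdelta (h', x' * b', y') z - fdelta (h', x', b' * y') z) \<and> b' \<in> BB"
  proof (intro exI conjI)
    show "fdelta (h, x * b, q) - fdelta (h, x, b * q)
      = (\<lambda>z. fdelta (h, x * b, q) z - fdelta (h, x, b * q) z)" by (simp add: fun_eq_iff)
  qed (rule b)
  then have "fdelta (h, x * b, q) - fdelta (h, x, b * q) \<in> balrels3 BB"
    unfolding balrels3_def by blast
  then show "fdelta (h, x * b, q) - fdelta (h, x, b * q) \<in> RH" unfolding relsHPBP_def by blast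
qed

context
  fixes S :: "'h \<Rightarrow> 'h"
  assumes anti: "antipode sH \<Delta>H \<epsilon>H S"
begin

lemma S_add: "S (x + y) = S x + S y" and S_sc: "S (sH k x) = sH k (S x)"
  using anti unfolding antipode_def lin_map_def by auto

lemma S_right: "(\<Sum>z\<in>supp (\<Delta>H x). sH (\<Delta>H x z) (fst z * S (snd z))) = sH (\<epsilon>H x) 1"
  using anti unfolding antipode_def by auto

definition Fm :: "'h \<Rightarrow> 'p \<Rightarrow> 'h \<times> 'p \<Rightarrow> 'h \<times> 'p \<times> 'p \<Rightarrow> 'k" where
  "Fm h p v = fdelta (h * S (fst v), p, snd v)"

definition \<Psi> :: "'h \<times> 'p \<times> 'p \<Rightarrow> 'h \<times> 'p \<times> 'p \<Rightarrow> 'k" where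
  "\<Psi> w = fext (Fm (fst w) (fst (snd w))) (\<rho>H (snd (snd w)))"

lemma Fm_eq: "Fm h p = (\<lambda>v. fdelta (h * S (fst v), p, snd v))"
  by (simp add: fun_eq_iff Fm_def)

lemma fin_\<Psi>[simp]: "fin (\<Psi> w)" unfolding \<Psi>_def Fm_def by (rule fin_fext) auto

lemma resp_F: "resp (Fm h p) R2HP RH"
proof (rule resp_rels2)
  fix a a' b
  show "teq RH (Fm h p (a + a', b)) (Fm h p (a, b) + Fm h p (a', b))"
    by (simp add: Fm_def S_add distrib_left lin_add[where g="\<lambda>a. (a, _, _)", OF lr3_1H])
next
  fix k a b
  show "teq RH (Fm h p (sH k a, b)) (fsc k (Fm h p (a, b)))"
    by (simp add: Fm_def S_sc kH(2)[symmetric] lin_scale[where g="\<lambda>a. (a, _, _)", OF lr3_1H])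
next
  fix a b b'
  show "teq RH (Fm h p (a, b + b')) (Fm h p (a, b) + Fm h p (a, b'))"
    by (simp add: Fm_def lin_add[where g="\<lambda>c. (_, _, c)", OF lr3_3H])
next
  fix k a b
  show "teq RH (Fm h p (a, sP k b)) (fsc k (Fm h p (a, b)))"
    by (simp add: Fm_def lin_scale[where g="\<lambda>c. (_, _, c)", OF lr3_3H])
qed

lemma Fm_teq: "fin u \<Longrightarrow> fin v \<Longrightarrow> teq R2HP u v \<Longrightarrow> teq RH (fext (Fm h p) u) (fext (Fm h p) v)"
  by (rule fext_resp[OF finrels_rels2 resp_F])

lemma resp_\<Psi>: "resp \<Psi> RH RH"
proof (rule resp_HPBP)
  show "resp \<Psi> (rels3 sH sP sP) RH"
  proof (rule resp_rels3)
    fix a a' b c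
    have "teq RH (fext (Fm (a + a') b) (\<rho>H c)) (fext (\<lambda>v. Fm a b v + Fm a' b v) (\<rho>H c))"
      by (rule fext_cong_teq)
         (simp add: Fm_def distrib_right lin_add[where g="\<lambda>a. (a, _, _)", OF lr3_1H])
    then show "teq RH (\<Psi> (a + a', b, c)) (\<Psi> (a, b, c) + \<Psi> (a', b, c))"
      by (simp add: \<Psi>_def fext_plus_fun)
  next
    fix k a b c
    have "teq RH (fext (Fm (sH k a) b) (\<rho>H c)) (fext (\<lambda>v. fsc k (Fm a b v)) (\<rho>H c))"
      by (rule fext_cong_teq)
         (simp add: Fm_def kH(1)[symmetric] lin_scale[where g="\<lambda>a. (a, _, _)", OF lr3_1H])
    then show "teq RH (\<Psi> (sH k a, b, c)) (fsc k (\<Psi> (a, b, c)))"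
      by (simp add: \<Psi>_def fext_fsc_fun)
  next
    fix a b b' c
    have "teq RH (fext (Fm a (b + b')) (\<rho>H c)) (fext (\<lambda>v. Fm a b v + Fm a b' v) (\<rho>H c))"
      by (rule fext_cong_teq) (simp add: Fm_def lin_add[where g="\<lambda>b. (_, b, _)", OF lr3_2H])
    then show "teq RH (\<Psi> (a, b + b', c)) (\<Psi> (a, b, c) + \<Psi> (a, b', c))"
      by (simp add: \<Psi>_def fext_plus_fun)
  next
    fix k a b c
    have "teq RH (fext (Fm a (sP k b)) (\<rho>H c)) (fext (\<lambda>v. fsc k (Fm a b v)) (\<rho>H c))"
      by (rule fext_cong_teq) (simp add: Fm_def lin_scale[where g="\<lambda>b. (_, b, _)", OF lr3_2H])
    then show "teq RH (\<Psi> (a, sP k b, c)) (fsc k (\<Psi> (a, b, c)))"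
      by (simp add: \<Psi>_def fext_fsc_fun)
  next
    fix a b c c'
    have "teq RH (fext (Fm a b) (\<rho>H (c + c'))) (fext (Fm a b) (\<rho>H c + \<rho>H c'))"
      by (intro Fm_teq fin_add \<rho>H_add finH)
    then show "teq RH (\<Psi> (a, b, c + c')) (\<Psi> (a, b, c) + \<Psi> (a, b, c'))"
      by (simp add: \<Psi>_def fext_add)
  next
    fix k a b c
    have "teq RH (fext (Fm a b) (\<rho>H (sP k c))) (fext (Fm a b) (fsc k (\<rho>H c)))"
      by (intro Fm_teq fin_fsc \<rho>H_sc finH)
    then show "teq RH (\<Psi> (a, b, sP k c)) (fsc k (\<Psi> (a, b, c)))"
      by (simp add: \<Psi>_def fext_fsc)
  qed
next
  fix h x y b assume b: "b \<in> BB"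
  have "teq R2HP (\<rho>H (b * y)) (tmul (fdelta (1, b)) (\<rho>H y))"
    by (rule teq_trans[OF alg tmul_teq1[OF finH _ finH coinvB[OF b]]]) simp
  then have F1: "teq RH (fext (Fm h x) (\<rho>H (b * y))) (fext (Fm h x) (tmul (fdelta (1, b)) (\<rho>H y)))"
    by (intro Fm_teq fin_tmul) auto
  have F2: "fext (Fm h x) (tmul (fdelta (1, b)) (\<rho>H y))
     = fext (\<lambda>v. fdelta (h * S (fst v), x, b * snd v)) (\<rho>H y)"
  proof -
    have "tmul (fdelta (1, b)) (\<rho>H y) = fext (\<lambda>v. fdelta (1 * fst v, b * snd v)) (\<rho>H y)"
      by (simp add: tmul_eq)
    then have "fext (Fm h x) (tmul (fdelta (1, b)) (\<rho>H y))
        = fext (\<lambda>v. fext (Fm h x) (fdelta (1 * fst v, b * snd v))) (\<rho>H y)"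
      by (simp only:) (rule fext_comp, simp_all)
    then show ?thesis by (simp add: Fm_def)
  qed
  have F3: "teq RH (fext (\<lambda>v. fdelta (h * S (fst v), x * b, snd v)) (\<rho>H y))
       (fext (\<lambda>v. fdelta (h * S (fst v), x, b * snd v)) (\<rho>H y))"
    by (rule fext_cong_teq) (rule bal_in[OF b])
  have "teq RH (fext (\<lambda>v. fdelta (h * S (fst v), x * b, snd v)) (\<rho>H y))
      (fext (Fm h x) (\<rho>H (b * y)))"
    by (rule teq_trans[OF F3 teq_sym[OF F1[unfolded F2]]])
  moreover have "(\<lambda>v. fdelta (h * S (fst v), x * b, snd v)) = Fm h (x * b)"
    by (simp add: Fm_def fun_eq_iff)
  ultimately show "teq RH (\<Psi> (h, x * b, y)) (\<Psi> (h, x, b * y))"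
    unfolding \<Psi>_def by simp
qed

definition Nu :: "'h \<times> 'p \<Rightarrow> 'h \<times> 'h \<times> 'p \<Rightarrow> 'h \<times> 'p \<times> 'p" where
  "Nu u w = (fst u * fst w * S (fst (snd w)), snd u, snd (snd w))"

lemma resp_N: "resp (\<lambda>w. fdelta (Nu u w)) (rels3 sH sH sP) RH"
proof (rule resp_rels3, goal_cases)
  case (1 a a' b c)
  show ?case using lin_add[where g="\<lambda>a. (a, snd u, c)" and a="fst u * a * S b" and a'="fst u * a' * S b", OF lr3_1H]
    by (simp add: Nu_def distrib_left distrib_right)
next
  case (2 k a b c)
  show ?case using lin_scale[where g="\<lambda>a. (a, snd u, c)" and a="fst u * a * S b" and k=k and s=sH, OF lr3_1H]
    by (simp add: Nu_def kH(2)[symmetric] kH(1)[symmetric])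
next
  case (3 a b b' c)
  show ?case using lin_add[where g="\<lambda>a. (a, snd u, c)" and a="fst u * a * S b" and a'="fst u * a * S b'", OF lr3_1H]
    by (simp add: Nu_def distrib_left S_add)
next
  case (4 k a b c)
  show ?case using lin_scale[where g="\<lambda>a. (a, snd u, c)" and a="fst u * a * S b" and k=k and s=sH, OF lr3_1H]
    by (simp add: Nu_def S_sc kH(2)[symmetric])
next
  case (5 a b c c')
  show ?case using lin_add[where g="\<lambda>c. (fst u * a * S b, snd u, c)" and a=c and a'=c', OF lr3_3H]
    by (simp add: Nu_def)
next
  case (6 k a b c)
  show ?case using lin_scale[where g="\<lambda>c. (fst u * a * S b, snd u, c)" and a=c and k=k and s=sP, OF lr3_3H]
    by (simp add: Nu_def)
qed

lemma inner_eps: "teq RH (fext (\<lambda>v. fdelta (fst u * fst v * S (snd v), snd u, q)) (\<Delta>H h))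
    (fsc (\<epsilon>H h) (fdelta (fst u, snd u, q)))"
proof -
  have "teq RH (\<Sum>v\<in>supp (\<Delta>H h). fsc (\<Delta>H h v) (fdelta ((\<lambda>a. (a, snd u, q)) (fst u * fst v * S (snd v)))))
      (fdelta ((\<lambda>a. (a, snd u, q)) (\<Sum>v\<in>supp (\<Delta>H h). sH (\<Delta>H h v) (fst u * fst v * S (snd v)))))"
    by (rule lin_collect[OF lr3_1H]) simp
  moreover have "(\<Sum>v\<in>supp (\<Delta>H h). sH (\<Delta>H h v) (fst u * fst v * S (snd v))) = sH (\<epsilon>H h) (fst u)"
  proof -
    have "(\<Sum>v\<in>supp (\<Delta>H h). sH (\<Delta>H h v) (fst u * fst v * S (snd v)))
        = (\<Sum>v\<in>supp (\<Delta>H h). fst u * sH (\<Delta>H h v) (fst v * S (snd v)))"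
      by (simp add: mult.assoc kH(2))
    also have "\<dots> = fst u * sH (\<epsilon>H h) 1" by (simp add: sum_distrib_left[symmetric] S_right)
    also have "\<dots> = sH (\<epsilon>H h) (fst u)" by (simp add: kH(2)[symmetric])
    finally show ?thesis .
  qed
  moreover have "teq RH (fdelta (sH (\<epsilon>H h) (fst u), snd u, q)) (fsc (\<epsilon>H h) (fdelta (fst u, snd u, q)))"
    by (rule lin_scale[where g="\<lambda>a. (a, snd u, q)", OF lr3_1H])
  ultimately show ?thesis
    by (simp add: fext_as_sum teq_trans)
qed

lemma inner: "teq RH (fext (\<lambda>v. \<Psi> (fst u * fst v, snd u, snd v)) (\<rho>H y)) (fdelta (fst u, snd u, y))"
proof -
  have s1: "fext (\<lambda>v. \<Psi> (fst u * fst v, snd u, snd v)) (\<rho>H y)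
      = fext (\<lambda>w. fdelta (Nu u w)) (tens_right \<rho>H (\<rho>H y))"
  proof -
    have "fext (\<lambda>w. fdelta (Nu u w)) (tens_right \<rho>H (\<rho>H y))
        = fext (\<lambda>w. fext (\<lambda>w'. fdelta (Nu u w')) (dl (fst w) (\<rho>H (snd w)))) (\<rho>H y)"
      unfolding tens_right_eq[OF finH] by (rule fext_comp) (auto intro: fin_dl)
    also have "\<dots> = fext (\<lambda>w. fext (\<lambda>v'. fdelta (Nu u (fst w, v'))) (\<rho>H (snd w))) (\<rho>H y)"
      by (rule fext_cong) (simp add: fext_dl)
    also have "\<dots> = fext (\<lambda>v. \<Psi> (fst u * fst v, snd u, snd v)) (\<rho>H y)"
      by (rule fext_cong) (simp add: \<Psi>_def Fm_eq Nu_def)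
    finally show ?thesis by simp
  qed
  have finTR: "fin (tens_right \<rho>H (\<rho>H y))" unfolding tens_right_eq[OF finH] by (rule fin_fext) (auto intro: fin_dl)
  have finTL: "fin (tens_left \<Delta>H (\<rho>H y))" unfolding tens_left_eq[OF finD] by (rule fin_fext) (auto intro: fin_fext)
  have s2: "teq RH (fext (\<lambda>w. fdelta (Nu u w)) (tens_right \<rho>H (\<rho>H y)))
                   (fext (\<lambda>w. fdelta (Nu u w)) (tens_left \<Delta>H (\<rho>H y)))"
    by (rule fext_resp[OF finrels_rels3 resp_N finTR finTL teq_sym[OF coassoc]])
  have s3: "fext (\<lambda>w. fdelta (Nu u w)) (tens_left \<Delta>H (\<rho>H y))
     = fext (\<lambda>w. fext (\<lambda>v. fdelta (fst u * fst v * S (snd v), snd u, snd w)) (\<Delta>H (fst w))) (\<rho>H y)"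
  proof -
    have "fext (\<lambda>w. fdelta (Nu u w)) (tens_left \<Delta>H (\<rho>H y))
      = fext (\<lambda>w. fext (\<lambda>w. fdelta (Nu u w)) (fext (\<lambda>v. fdelta (fst v, snd v, snd w)) (\<Delta>H (fst w)))) (\<rho>H y)"
      unfolding tens_left_eq[OF finD] by (rule fext_comp) (auto intro: fin_fext)
    also have "\<dots> = fext (\<lambda>w. fext (\<lambda>v. fdelta (fst u * fst v * S (snd v), snd u, snd w)) (\<Delta>H (fst w))) (\<rho>H y)"
      by (rule fext_cong) (simp add: fext_comp Nu_def)
    finally show ?thesis .
  qed
  have s4: "teq RH (fext (\<lambda>w. fext (\<lambda>v. fdelta (fst u * fst v * S (snd v), snd u, snd w)) (\<Delta>H (fst w))) (\<rho>H y))
      (fext (\<lambda>w. fsc (\<epsilon>H (fst w)) (fdelta (fst u, snd u, snd w))) (\<rho>H y))"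
    by (rule fext_cong_teq) (rule inner_eps)
  have s5: "teq RH (fext (\<lambda>w. fsc (\<epsilon>H (fst w)) (fdelta (fst u, snd u, snd w))) (\<rho>H y)) (fdelta (fst u, snd u, y))"
  proof -
    have e: "fext (\<lambda>w. fsc (\<epsilon>H (fst w)) (fdelta (fst u, snd u, snd w))) (\<rho>H y)
      = (\<Sum>w\<in>supp (\<rho>H y). fsc (\<rho>H y w * \<epsilon>H (fst w)) (fdelta ((\<lambda>a. (fst u, snd u, a)) (snd w))))"
      by (simp add: fext_as_sum fsc_fsc)
    have "teq RH (\<Sum>w\<in>supp (\<rho>H y). fsc (\<rho>H y w * \<epsilon>H (fst w)) (fdelta ((\<lambda>a. (fst u, snd u, a)) (snd w))))
       (fdelta ((\<lambda>a. (fst u, snd u, a)) (\<Sum>w\<in>supp (\<rho>H y). sP (\<rho>H y w * \<epsilon>H (fst w)) (snd w))))"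
      by (rule lin_collect[OF lr3_3H]) simp
    then show ?thesis unfolding e by (simp add: counitH)
  qed
  show ?thesis unfolding s1
    by (rule teq_trans[OF s2 teq_trans[OF s4[folded s3] s5]])
qed

lemma part2_gen: "teq RH (fext \<Psi> (\<Phi>m z)) (fext (\<lambda>v. fdelta (fst v, snd v, snd z)) (\<rho>H (fst z)))"
proof -
  have e: "fext \<Psi> (\<Phi>m z) = fext (\<lambda>u. fext (\<lambda>v. \<Psi> (fst u * fst v, snd u, snd v)) (\<rho>H (snd z))) (\<rho>H (fst z))"
    unfolding \<Phi>m_eq by (rule fext_double) simp_all
  have "teq RH (fext (\<lambda>u. fext (\<lambda>v. \<Psi> (fst u * fst v, snd u, snd v)) (\<rho>H (snd z))) (\<rho>H (fst z)))
      (fext (\<lambda>u. fdelta (fst u, snd u, snd z)) (\<rho>H (fst z)))"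
    by (rule fext_cong_teq) (rule inner)
  then show ?thesis unfolding e .
qed

lemma part2:
  assumes t: "fin t" and ct: "teq R2PC (can \<rho>C t) (fdelta (1, c))"
  shows "teq RH (fext (\<lambda>z. fext (\<lambda>v. fdelta (fst v, snd v, snd z)) (\<rho>H (fst z))) t)
                (fext (\<lambda>z. fext (\<lambda>v. fdelta (S (fst v), fst z, snd v)) (\<rho>H (snd z))) t)"
proof -
  have P: "teq RH (fext \<Phi>m t) (dl 1 t)" by (rule part1[OF t ct])
  have finL: "fin (fext \<Phi>m t)" using t by (intro fin_fext) auto
  have Q: "teq RH (fext \<Psi> (fext \<Phi>m t)) (fext \<Psi> (dl 1 t))"
    by (rule fext_resp[OF finrels_relsHPBP resp_\<Psi> finL fin_dl[OF t] P])
  have L: "fext \<Psi> (fext \<Phi>m t) = fext (\<lambda>z. fext \<Psi> (\<Phi>m z)) t" using t by (intro fext_comp) auto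
  have L2: "teq RH (fext (\<lambda>z. fext \<Psi> (\<Phi>m z)) t) (fext (\<lambda>z. fext (\<lambda>v. fdelta (fst v, snd v, snd z)) (\<rho>H (fst z))) t)"
    by (rule fext_cong_teq) (rule part2_gen)
  have R: "fext \<Psi> (dl 1 t) = fext (\<lambda>z. fext (\<lambda>v. fdelta (S (fst v), fst z, snd v)) (\<rho>H (snd z))) t"
    using t by (simp add: fext_dl \<Psi>_def Fm_eq)
  show ?thesis
    using teq_trans[OF teq_sym[OF L2] Q[unfolded L]] unfolding R .
qed

end

end

theorem mainTheorem4:
  fixes sC :: "'k::field \<Rightarrow> 'c::ab_group_add \<Rightarrow> 'c"
    and \<Delta>C :: "'c \<Rightarrow> 'c \<times> 'c \<Rightarrow> 'k" and \<epsilon>C :: "'c \<Rightarrow> 'k"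
    and sH :: "'k \<Rightarrow> 'h::{ring,monoid_mult} \<Rightarrow> 'h"
    and \<Delta>H :: "'h \<Rightarrow> 'h \<times> 'h \<Rightarrow> 'k" and \<epsilon>H :: "'h \<Rightarrow> 'k"
    and sP :: "'k \<Rightarrow> 'p::{ring,monoid_mult} \<Rightarrow> 'p"
    and \<rho>H :: "'p \<Rightarrow> 'h \<times> 'p \<Rightarrow> 'k" and \<rho>C :: "'p \<Rightarrow> 'p \<times> 'c \<Rightarrow> 'k"
  assumes "coalgebra sC \<Delta>C \<epsilon>C"
    and "bialgebra sH \<Delta>H \<epsilon>H"
    and "k_algebra sP"
    and "bicomodule sH \<Delta>H \<epsilon>H sC \<Delta>C \<epsilon>C sP \<rho>H \<rho>C"
    and "coaction_alg_map sH sP \<rho>H"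
    and "galois sC sP \<rho>C"
    and "coinvC sC sP \<rho>C \<subseteq> coinvH sH sP \<rho>H"
  shows "(\<forall>c t. finite (supp t) \<and> teq (rels2 sP sC) (can \<rho>C t) (fdelta (1, c)) \<longrightarrow>
           teq (relsHPBP sH sP (coinvC sC sP \<rho>C))
             (fext (\<lambda>(x, y). fmap (\<lambda>((h1, p1), (h2, q1)). (h1 * h2, p1, q1))
                                  (ftens (\<rho>H x) (\<rho>H y))) t)
             (fmap (\<lambda>(x, y). (1, x, y)) t))
    \<and> (\<forall>S. antipode sH \<Delta>H \<epsilon>H S \<longrightarrow>
         (\<forall>c t. finite (supp t) \<and> teq (rels2 sP sC) (can \<rho>C t) (fdelta (1, c)) \<longrightarrow>
           teq (relsHPBP sH sP (coinvC sC sP \<rho>C))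
             (fext (\<lambda>(x, y). fmap (\<lambda>(h, p). (h, p, y)) (\<rho>H x)) t)
             (fext (\<lambda>(x, y). fmap (\<lambda>(h, q). (S h, x, q)) (\<rho>H y)) t)))"
proof -
  interpret setting sC \<Delta>C \<epsilon>C sH \<Delta>H \<epsilon>H sP \<rho>H \<rho>C
    by (rule setting.intro) (rule assms)+
  have e1: "(\<lambda>(x, y). fmap (\<lambda>((h1, p1), (h2, q1)). (h1 * h2, p1, q1)) (ftens (\<rho>H x) (\<rho>H y))) = \<Phi>m"
    by (simp add: fun_eq_iff \<Phi>m_def)
  have e2: "(\<lambda>(x, y). fmap (\<lambda>(h, p). (h, p, y)) (\<rho>H x))
      = (\<lambda>z. fext (\<lambda>v. fdelta (fst v, snd v, snd z)) (\<rho>H (fst z)))"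
    by (simp add: fun_eq_iff fmap_fext split_beta)
  have e3: "(\<lambda>(x, y). fmap (\<lambda>(h, q). (S h, x, q)) (\<rho>H y))
      = (\<lambda>z. fext (\<lambda>v. fdelta (S (fst v), fst z, snd v)) (\<rho>H (snd z)))" for S :: "'h \<Rightarrow> 'h"
    by (simp add: fun_eq_iff fmap_fext split_beta)
  show ?thesis
  proof (intro conjI allI impI)
    fix c t
    assume a: "finite (supp t) \<and> teq (rels2 sP sC) (can \<rho>C t) (fdelta (1, c))"
    show "teq (relsHPBP sH sP (coinvC sC sP \<rho>C))
             (fext (\<lambda>(x, y). fmap (\<lambda>((h1, p1), (h2, q1)). (h1 * h2, p1, q1))
                                  (ftens (\<rho>H x) (\<rho>H y))) t)
             (fmap (\<lambda>(x, y). (1, x, y)) t)"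
    proof -
      have f: "fmap (\<lambda>(x, y). (1, x, y)) t = dl 1 t" using a by (intro fmap_as_dl) auto
      show ?thesis unfolding e1 f using part1[of t c] a by auto
    qed
  next
    fix S c t
    assume anti: "antipode sH \<Delta>H \<epsilon>H S"
      and a: "finite (supp t) \<and> teq (rels2 sP sC) (can \<rho>C t) (fdelta (1, c))"
    then show "teq (relsHPBP sH sP (coinvC sC sP \<rho>C))
             (fext (\<lambda>(x, y). fmap (\<lambda>(h, p). (h, p, y)) (\<rho>H x)) t)
             (fext (\<lambda>(x, y). fmap (\<lambda>(h, q). (S h, x, q)) (\<rho>H y)) t)"
      unfolding e2 e3 using part2[OF anti, of t c] by simp
  qed
qed

end
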